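(* There exists a deterministic algorithm $A$ such that for every positive integer $k$, every graph $G$ on $n$ nodes (of maximum degree at most $\Delta$) and every colored tree labeling of $G$, $A$ (given $k$) solves $\textsf{Hierarchical-THC}(k)$ on this input, and every execution of $A$ has distance cost $O(k\, n^{1/k})$ (with an absolute constant in the $O$).
   Context: Computational model. Fix a constant $\Delta\ge3$. An input is a graph $G=(V,E)$ on $n$ nodes with maximum degree at most $\Delta$, where each node has a unique identifier in $\{1,\dots,n^\alpha\}$ (some fixed $\alpha\ge1$), a port numbering, and an input label; $n$ is known to every node. An algorithm executed from a node $v$ maintains a set $V_v$ of visited nodes, initially $\{v\}$; in each step it queries $(w,j)$ with $w\in V_v$, $j\in\{1,\dots,\deg(w)\}$, and receives the identifier, degree and entire input of the neighbor $u$ of $w$ at port $j$, which is added to $V_v$; eventually it outputs the output label of $v$. Its distance cost is $\max_{w\in V_v}\mathrm{dist}(v,w)$. A deterministic algorithm solves a problem if the outputs from all nodes always form a valid output. Colored tree labelings. A colored tree labeling assigns to each node $v$ a parent $\mathrm{P}(v)$, a left child $\mathrm{LC}(v)$ and a right child $\mathrm{RC}(v)$, each in $\{1,\dots,\Delta\}\cup\{\bot\}$ (a non-$\bot$ value is a port number of $v$ identified with the neighbor reached through it; the non-$\bot$ values at $v$ are pairwise distinct), and a color $\chi_{\mathrm{in}}(v)\in\{R,B\}$. Hierarchical forest. Define $\mathrm{level}(v)=1$ if $\mathrm{RC}(v)=\bot$ and $\mathrm{level}(v)=1+\mathrm{level}(\mathrm{RC}(v))$ otherwise. For $k\ge1$,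 the hierarchical forest $G_k$ contains the edge $\{u,v\}$ iff $\mathrm{level}(u),\mathrm{level}(v)\le k$, $v=\mathrm{P}(u)$, and either ($u=\mathrm{LC}(v)$ and $\mathrm{level}(v)=\mathrm{level}(u)$) or ($u=\mathrm{RC}(v)$ and $\mathrm{level}(v)=\mathrm{level}(u)+1$). In the conditions below, a label $\mathrm{P}(v),\mathrm{LC}(v),\mathrm{RC}(v)$ whose corresponding edge is not in $G_k$ is treated as $\bot$. A node $v$ of level $\ell$ is a level-$\ell$ root if $\mathrm{P}(v)=\bot$ or $v=\mathrm{RC}(\mathrm{P}(v))$, and a level-$\ell$ leaf if $\mathrm{LC}(v)=\bot$. The problem $\textsf{Hierarchical-THC}(k)$: the input is a colored tree labeling; each node outputs $\chi_{\mathrm{out}}(v)\in\{R,B,D,X\}$; the output is valid iff for every node $v$, with $\ell=\mathrm{level}(v)$: (1) if $\ell>k$ then $\chi_{\mathrm{out}}(v)=X$; (2) if $v$ is a level-$\ell$ leaf then $\chi_{\mathrm{out}}(v)\in\{\chi_{\mathrm{in}}(v),D,X\}$; (3) if $\ell=1$ then (a) $\chi_{\mathrm{out}}(v)\in\{R,B,D\}$ and (b) if $v$ is not a level-1 leaf then $\chi_{\mathrm{out}}(v)=\chi_{\mathrm{out}}(\mathrm{LC}(v))$; (4) if $1<\ell<k$ and $v$ is not a level-$\ell$ leaf then either (a) $\chi_{\mathrm{out}}(v)=\chi_{\mathrm{out}}(\mathrm{LC}(v))\in\{R,B,D\}$, or (b) $\chi_{\mathrm{out}}(v)=X$ and $\chi_{\mathrm{out}}(\mathrm{RC}(v))\in\{R,B,X\}$,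 or (c) $\chi_{\mathrm{out}}(v)\in\{\chi_{\mathrm{in}}(v),D\}$ and $\chi_{\mathrm{out}}(\mathrm{LC}(v))=X$; (5) if $\ell=k$ then $\chi_{\mathrm{out}}(v)\in\{R,B,X\}$ and (a) if $\chi_{\mathrm{out}}(v)=X$ then $\chi_{\mathrm{out}}(\mathrm{RC}(v))\in\{R,B,X\}$, and (b) if $v$ is not a level-$\ell$ leaf and $\chi_{\mathrm{out}}(v)\ne X$ then either $\chi_{\mathrm{out}}(\mathrm{LC}(v))\ne X$ and $\chi_{\mathrm{out}}(v)=\chi_{\mathrm{out}}(\mathrm{LC}(v))$, or $\chi_{\mathrm{out}}(\mathrm{LC}(v))=X$ and $\chi_{\mathrm{out}}(v)=\chi_{\mathrm{in}}(v)$. *)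

theory Defs
  imports Complex_Main
begin

text \<open>A single colour type; input colours are required to lie in {R,B}.
  \<open>None\<close> plays the role of \<open>\<bottom>\<close>.\<close>
datatype color = R | B | D | X

record label =
  par :: "nat option"   \<comment> \<open>P(v): a port number of v, or None\<close>
  lc  :: "nat option"
  rc  :: "nat option"
  cin :: color

text \<open>An input: the nodes are (hidden) names 0..<n; deg, port numbering,
  identifiers and input labels.\<close>
record inst =
  deg   :: "nat \<Rightarrow> nat"
  port  :: "nat \<Rightarrow> nat \<Rightarrow> nat"
  ident :: "nat \<Rightarrow> nat"
  lab   :: "nat \<Rightarrow> label"

definition adj :: "inst \<Rightarrow> nat \<Rightarrow> nat \<Rightarrow> bool" where
  "adj I u w \<longleftrightarrow> (\<exists>j. 1 \<le> j \<and> j \<le> deg I u \<and> port I u j = w)"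

definition valid_graph :: "nat \<Rightarrow> real \<Rightarrow> nat \<Rightarrow> inst \<Rightarrow> bool" where
  "valid_graph \<Delta> \<alpha> n I \<longleftrightarrow>
     (\<forall>v<n. deg I v \<le> \<Delta>) \<and>
     (\<forall>v<n. \<forall>j. 1 \<le> j \<and> j \<le> deg I v \<longrightarrow> port I v j < n \<and> port I v j \<noteq> v) \<and>
     (\<forall>v<n. inj_on (port I v) {1..deg I v}) \<and>
     (\<forall>v<n. \<forall>w. adj I v w \<longrightarrow> adj I w v) \<and>
     inj_on (ident I) {0..<n} \<and>
     (\<forall>v<n. 1 \<le> ident I v \<and> real (ident I v) \<le> real n powr \<alpha>)"

definition valid_port_label :: "nat \<Rightarrow> inst \<Rightarrow> nat \<Rightarrow> nat option \<Rightarrow> bool" where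
  "valid_port_label \<Delta> I v p \<longleftrightarrow> (\<forall>j. p = Some j \<longrightarrow> 1 \<le> j \<and> j \<le> \<Delta> \<and> j \<le> deg I v)"

definition colored_tree_labeling :: "nat \<Rightarrow> nat \<Rightarrow> inst \<Rightarrow> bool" where
  "colored_tree_labeling \<Delta> n I \<longleftrightarrow>
     (\<forall>v<n. valid_port_label \<Delta> I v (par (lab I v)) \<and>
            valid_port_label \<Delta> I v (lc (lab I v)) \<and>
            valid_port_label \<Delta> I v (rc (lab I v)) \<and>
            (par (lab I v) \<noteq> None \<longrightarrow> par (lab I v) \<noteq> lc (lab I v)) \<and>
            (par (lab I v) \<noteq> None \<longrightarrow> par (lab I v) \<noteq> rc (lab I v)) \<and>
            (lc (lab I v) \<noteq> None \<longrightarrow> lc (lab I v) \<noteq> rc (lab I v)) \<and>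
            cin (lab I v) \<in> {R, B})"

definition nbr :: "inst \<Rightarrow> nat \<Rightarrow> nat option \<Rightarrow> nat option" where
  "nbr I v p = map_option (port I v) p"

inductive has_level :: "inst \<Rightarrow> nat \<Rightarrow> nat \<Rightarrow> bool" for I where
  base: "rc (lab I v) = None \<Longrightarrow> has_level I v 1"
| step: "rc (lab I v) = Some j \<Longrightarrow> has_level I (port I v j) l \<Longrightarrow> has_level I v (Suc l)"

text \<open>level(v); None means the RC-chain never reaches \<bottom> (level is infinite).\<close>
definition level :: "inst \<Rightarrow> nat \<Rightarrow> nat option" where
  "level I v = (if \<exists>l. has_level I v l then Some (THE l. has_level I v l) else None)"

definition gk_child :: "inst \<Rightarrow> nat \<Rightarrow> nat \<Rightarrow> nat \<Rightarrow> bool" where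
  "gk_child I k u v \<longleftrightarrow>
     (\<exists>lu lv. level I u = Some lu \<and> level I v = Some lv \<and> lu \<le> k \<and> lv \<le> k \<and>
        nbr I u (par (lab I u)) = Some v \<and>
        ((nbr I v (lc (lab I v)) = Some u \<and> lv = lu) \<or>
         (nbr I v (rc (lab I v)) = Some u \<and> lv = lu + 1)))"

definition gk_edge :: "inst \<Rightarrow> nat \<Rightarrow> nat \<Rightarrow> nat \<Rightarrow> bool" where
  "gk_edge I k u v \<longleftrightarrow> gk_child I k u v \<or> gk_child I k v u"

definition eff :: "inst \<Rightarrow> nat \<Rightarrow> nat \<Rightarrow> nat option \<Rightarrow> nat option" where
  "eff I k v p = (case nbr I v p of None \<Rightarrow> None
                   | Some w \<Rightarrow> (if gk_edge I k v w then Some w else None))"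

definition LCk :: "inst \<Rightarrow> nat \<Rightarrow> nat \<Rightarrow> nat option" where
  "LCk I k v = eff I k v (lc (lab I v))"

definition RCk :: "inst \<Rightarrow> nat \<Rightarrow> nat \<Rightarrow> nat option" where
  "RCk I k v = eff I k v (rc (lab I v))"

definition is_leaf :: "inst \<Rightarrow> nat \<Rightarrow> nat \<Rightarrow> bool" where
  "is_leaf I k v \<longleftrightarrow> LCk I k v = None"

definition rc_out_in :: "inst \<Rightarrow> nat \<Rightarrow> (nat \<Rightarrow> color) \<Rightarrow> nat \<Rightarrow> color set \<Rightarrow> bool" where
  "rc_out_in I k out v S \<longleftrightarrow> (\<forall>w. RCk I k v = Some w \<longrightarrow> out w \<in> S)"

definition hthc_valid :: "nat \<Rightarrow> nat \<Rightarrow> inst \<Rightarrow> (nat \<Rightarrow> color) \<Rightarrow> bool" where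
  "hthc_valid k n I out \<longleftrightarrow> (\<forall>v<n.
     let lcv = the (LCk I k v); leaf = is_leaf I k v; ci = cin (lab I v) in
     ((\<forall>l. level I v = Some l \<longrightarrow> l \<le> k) \<or> out v = X) \<and>
     (leaf \<longrightarrow> out v \<in> {ci, D, X}) \<and>
     (\<forall>l. level I v = Some l \<longrightarrow>
        (l = 1 \<longrightarrow> out v \<in> {R, B, D} \<and> (\<not> leaf \<longrightarrow> out v = out lcv)) \<and>
        (1 < l \<and> l < k \<and> \<not> leaf \<longrightarrow>
           (out v = out lcv \<and> out lcv \<in> {R, B, D}) \<or>
           (out v = X \<and> rc_out_in I k out v {R, B, X}) \<or>
           (out v \<in> {ci, D} \<and> out lcv = X)) \<and>
        (l = k \<longrightarrow> out v \<in> {R, B, X} \<and>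
           (out v = X \<longrightarrow> rc_out_in I k out v {R, B, X}) \<and>
           (\<not> leaf \<and> out v \<noteq> X \<longrightarrow>
              (out lcv \<noteq> X \<and> out v = out lcv) \<or> (out lcv = X \<and> out v = ci)))))"

datatype action = Query nat nat | Output color

definition obs :: "inst \<Rightarrow> nat \<Rightarrow> nat \<times> nat \<times> label" where
  "obs I w = (ident I w, deg I w, lab I w)"

text \<open>A deterministic algorithm, given k and n, maps the sequence of observations of the
  nodes discovered so far (in discovery order, the start node first) to its next action;
  a query (i, j) asks for the neighbour at port j of the i-th discovered node.\<close>
type_synonym algorithm = "nat \<Rightarrow> nat \<Rightarrow> (nat \<times> nat \<times> label) list \<Rightarrow> action"

primrec exec :: "((nat \<times> nat \<times> label) list \<Rightarrow> action) \<Rightarrow> inst \<Rightarrow> nat list \<Rightarrow> nat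
                   \<Rightarrow> (color \<times> nat list) option" where
  "exec A I vs 0 = None"
| "exec A I vs (Suc f) =
     (case A (map (obs I) vs) of
        Output c \<Rightarrow> Some (c, vs)
      | Query i j \<Rightarrow>
          (if i < length vs \<and> 1 \<le> j \<and> j \<le> deg I (vs ! i)
           then exec A I (vs @ [port I (vs ! i) j]) f else None))"

definition dist :: "inst \<Rightarrow> nat \<Rightarrow> nat \<Rightarrow> nat" where
  "dist I v w = (LEAST d. ((adj I) ^^ d) v w)"

end

theory Submission imports Defs begin

type_synonym ob = "nat \<times> nat \<times> label"

definition idn :: "(nat \<Rightarrow> ob) \<Rightarrow> nat \<Rightarrow> nat" where "idn Q x = fst (Q x)"
definition lb :: "(nat \<Rightarrow> ob) \<Rightarrow> nat \<Rightarrow> label" where "lb Q x = snd (snd (Q x))"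

primrec lvl :: "(nat \<Rightarrow> nat \<Rightarrow> nat) \<Rightarrow> (nat \<Rightarrow> ob) \<Rightarrow> nat \<Rightarrow> nat \<Rightarrow> nat option" where
  "lvl N Q 0 x = None"
| "lvl N Q (Suc f) x = (case rc (lb Q x) of None \<Rightarrow> Some 1 | Some j \<Rightarrow> map_option Suc (lvl N Q f (N x j)))"

definition linkp :: "(nat \<Rightarrow> nat \<Rightarrow> nat) \<Rightarrow> (nat \<Rightarrow> ob) \<Rightarrow> nat \<Rightarrow> nat option \<Rightarrow> nat \<Rightarrow> bool" where
  "linkp N Q c p x = (case p of None \<Rightarrow> False | Some j \<Rightarrow> idn Q (N c j) = idn Q x)"

definition dnF :: "(nat \<Rightarrow> nat \<Rightarrow> nat) \<Rightarrow> (nat \<Rightarrow> ob) \<Rightarrow> nat \<Rightarrow> nat \<Rightarrow> nat option" where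
  "dnF N Q k x = (case lc (lb Q x) of None \<Rightarrow> None | Some j \<Rightarrow>
     (if lvl N Q k x \<noteq> None \<and> lvl N Q k (N x j) = lvl N Q k x \<and> linkp N Q (N x j) (par (lb Q (N x j))) x
      then Some (N x j) else None))"

definition upF :: "(nat \<Rightarrow> nat \<Rightarrow> nat) \<Rightarrow> (nat \<Rightarrow> ob) \<Rightarrow> nat \<Rightarrow> nat \<Rightarrow> nat option" where
  "upF N Q k x = (case par (lb Q x) of None \<Rightarrow> None | Some j \<Rightarrow>
     (if lvl N Q k x \<noteq> None \<and> lvl N Q k (N x j) = lvl N Q k x \<and> linkp N Q (N x j) (lc (lb Q (N x j))) x
      then Some (N x j) else None))"

definition rcF :: "(nat \<Rightarrow> nat \<Rightarrow> nat) \<Rightarrow> (nat \<Rightarrow> ob) \<Rightarrow> nat \<Rightarrow> nat \<Rightarrow> nat option" where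
  "rcF N Q k x = (case rc (lb Q x) of None \<Rightarrow> None | Some j \<Rightarrow>
     (if lvl N Q k x \<noteq> None \<and> linkp N Q (N x j) (par (lb Q (N x j))) x
      then Some (N x j) else None))"

primrec iter :: "(nat \<Rightarrow> nat option) \<Rightarrow> nat \<Rightarrow> nat \<Rightarrow> nat option" where
  "iter s 0 x = Some x"
| "iter s (Suc m) x = (case s x of None \<Rightarrow> None | Some y \<Rightarrow> iter s m y)"

primrec topw :: "(nat \<Rightarrow> nat option) \<Rightarrow> nat \<Rightarrow> nat \<Rightarrow> nat option" where
  "topw s 0 y = (case s y of None \<Rightarrow> Some y | Some _ \<Rightarrow> None)"
| "topw s (Suc f) y = (case s y of None \<Rightarrow> Some y | Some u \<Rightarrow> topw s f u)"

definition cycp :: "nat \<Rightarrow> (nat \<Rightarrow> ob) \<Rightarrow> (nat \<Rightarrow> nat option) \<Rightarrow> nat \<Rightarrow> bool" where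
  "cycp t Q ub x = (\<exists>m\<in>{1..t}. \<exists>z. iter ub m x = Some z \<and> idn Q z = idn Q x)"

definition badout :: "nat \<Rightarrow> (nat \<Rightarrow> ob) \<Rightarrow> (nat \<Rightarrow> nat option) \<Rightarrow> (nat \<Rightarrow> nat option) \<Rightarrow> nat \<Rightarrow> color" where
  "badout t Q ub db x = (if cycp t Q ub x then R
    else case topw ub t x of None \<Rightarrow> D
       | Some T \<Rightarrow> (case topw db (t - 1) T of None \<Rightarrow> D | Some b \<Rightarrow> cin (lb Q b)))"

definition goodp :: "(nat \<Rightarrow> nat \<Rightarrow> nat) \<Rightarrow> (nat \<Rightarrow> ob) \<Rightarrow> nat \<Rightarrow> nat \<Rightarrow> (nat \<Rightarrow> color) \<Rightarrow> nat \<Rightarrow> bool" where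
  "goodp N Q k l h y = (1 \<le> l \<and> (case rcF N Q k y of None \<Rightarrow> True | Some u \<Rightarrow> h u \<noteq> D))"

definition dbp :: "(nat \<Rightarrow> nat \<Rightarrow> nat) \<Rightarrow> (nat \<Rightarrow> ob) \<Rightarrow> nat \<Rightarrow> (nat \<Rightarrow> bool) \<Rightarrow> nat \<Rightarrow> nat option" where
  "dbp N Q k g y = (if g y then None else case dnF N Q k y of None \<Rightarrow> None | Some c \<Rightarrow> if g c then None else Some c)"

definition ubp :: "(nat \<Rightarrow> nat \<Rightarrow> nat) \<Rightarrow> (nat \<Rightarrow> ob) \<Rightarrow> nat \<Rightarrow> (nat \<Rightarrow> bool) \<Rightarrow> nat \<Rightarrow> nat option" where
  "ubp N Q k g y = (if g y then None else case upF N Q k y of None \<Rightarrow> None | Some c \<Rightarrow> if g c then None else Some c)"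

primrec oF :: "(nat \<Rightarrow> nat \<Rightarrow> nat) \<Rightarrow> (nat \<Rightarrow> ob) \<Rightarrow> nat \<Rightarrow> nat \<Rightarrow> nat \<Rightarrow> nat \<Rightarrow> color" where
  "oF N Q k t 0 x = X"
| "oF N Q k t (Suc l) x = (if goodp N Q k l (oF N Q k t l) x then X
      else badout t Q (ubp N Q k (goodp N Q k l (oF N Q k t l))) (dbp N Q k (goodp N Q k l (oF N Q k t l))) x)"

definition outF :: "(nat \<Rightarrow> nat \<Rightarrow> nat) \<Rightarrow> (nat \<Rightarrow> ob) \<Rightarrow> nat \<Rightarrow> nat \<Rightarrow> nat \<Rightarrow> color" where
  "outF N Q k t x = (case lvl N Q k x of None \<Rightarrow> X | Some l \<Rightarrow> oF N Q k t l x)"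

primrec costf :: "nat \<Rightarrow> nat \<Rightarrow> nat \<Rightarrow> nat" where
  "costf k t 0 = 0"
| "costf k t (Suc l) = 2*t + 2 + max (k+2) (1 + costf k t l)"

lemma costf_Suc_ge: "costf k t l \<le> costf k t (Suc l)"
  by (induction l) auto

lemma costf_mono: "l \<le> l' \<Longrightarrow> costf k t l \<le> costf k t l'"
  by (rule lift_Suc_mono_le[of "costf k t"]) (auto simp: costf_Suc_ge)

lemma costf_bound: "costf k t l \<le> l*(2*t+3) + k + 1"
  by (induction l) auto

lemma costf_ge: "1 \<le> l \<Longrightarrow> k + 2 \<le> costf k t l"
  by (cases l) auto

locale simu =
  fixes N1 :: "nat \<Rightarrow> nat \<Rightarrow> nat" and Q1 :: "nat \<Rightarrow> ob" and N2 :: "nat \<Rightarrow> nat \<Rightarrow> nat" and Q2 :: "nat \<Rightarrow> ob"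
    and W :: "nat \<Rightarrow> nat" and ok :: "nat \<Rightarrow> nat \<Rightarrow> bool"
  assumes okQ: "ok r a \<Longrightarrow> Q1 a = Q2 (W a)"
  and okmono: "ok r a \<Longrightarrow> r' \<le> r \<Longrightarrow> ok r' a"
  and okstep: "ok (Suc r) a \<Longrightarrow> par (lb Q1 a) = Some j \<or> lc (lb Q1 a) = Some j \<or> rc (lb Q1 a) = Some j
     \<Longrightarrow> ok r (N1 a j) \<and> W (N1 a j) = N2 (W a) j"
begin

lemma lb_eq: "ok r a \<Longrightarrow> lb Q1 a = lb Q2 (W a)" by (simp add: lb_def okQ)
lemma idn_eq: "ok r a \<Longrightarrow> idn Q1 a = idn Q2 (W a)" by (simp add: idn_def okQ)

lemma lvl_sim: "ok r a \<Longrightarrow> f \<le> r \<Longrightarrow> lvl N1 Q1 f a = lvl N2 Q2 f (W a)"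
proof (induction f arbitrary: a r)
  case 0 then show ?case by simp
next
  case (Suc f)
  then obtain r' where r: "r = Suc r'" by (cases r) auto
  show ?case
  proof (cases "rc (lb Q1 a)")
    case None then show ?thesis using Suc.prems by (simp add: lb_eq[symmetric])
  next
    case (Some j)
    have st: "ok r' (N1 a j)" "W (N1 a j) = N2 (W a) j" using okstep Suc.prems Some r by blast+
    have "lvl N1 Q1 f (N1 a j) = lvl N2 Q2 f (W (N1 a j))" using Suc st r by simp
    then show ?thesis using Suc.prems Some r st(2) by (simp add: lb_eq[symmetric])
  qed
qed

lemma linkp_sim:
  assumes "ok (Suc r) c" "ok r' x" "p = par (lb Q1 c) \<or> p = lc (lb Q1 c)"
  shows "linkp N1 Q1 c p x = linkp N2 Q2 (W c) p (W x)"
proof (cases p)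
  case None then show ?thesis by (simp add: linkp_def)
next
  case (Some j)
  have st: "ok r (N1 c j)" "W (N1 c j) = N2 (W c) j" using okstep assms Some by metis+
  have "idn Q1 (N1 c j) = idn Q2 (W (N1 c j))" "idn Q1 x = idn Q2 (W x)" using st assms idn_eq by blast+
  then show ?thesis using Some st(2) by (simp add: linkp_def)
qed

definition "orel r s1 s2 \<equiv> s2 = map_option W s1 \<and> (\<forall>c. s1 = Some c \<longrightarrow> ok r c)"

lemma dnF_sim:
  assumes "ok r a" "k + 2 \<le> r"
  shows "orel (r - 1) (dnF N1 Q1 k a) (dnF N2 Q2 k (W a))"
proof (cases "lc (lb Q1 a)")
  case None then show ?thesis using assms by (simp add: dnF_def orel_def lb_eq[symmetric])
next
  case (Some j)
  obtain r' where r: "r = Suc r'" using assms by (cases r) auto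
  have st: "ok r' (N1 a j) \<and> W (N1 a j) = N2 (W a) j" using okstep assms Some r by blast
  have l1: "lvl N1 Q1 k a = lvl N2 Q2 k (W a)" using lvl_sim assms by simp
  have l2: "lvl N1 Q1 k (N1 a j) = lvl N2 Q2 k (W (N1 a j))" using lvl_sim st assms r by (metis Suc_le_mono add_2_eq_Suc' le_SucI)
  have r'': "ok (Suc (r' - 1)) (N1 a j)" using st okmono assms r by (metis Suc_pred' add_2_eq_Suc' le_add2 not_less_eq_eq zero_less_Suc le_trans less_eq_Suc_le)
  have lk: "linkp N1 Q1 (N1 a j) (par (lb Q1 (N1 a j))) a = linkp N2 Q2 (W (N1 a j)) (par (lb Q2 (W (N1 a j)))) (W a)"
    using linkp_sim[OF r'' assms(1)] st lb_eq by metis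
  have lcq: "lc (lb Q2 (W a)) = Some j" using Some lb_eq assms(1) by metis
  have e2: "dnF N2 Q2 k (W a) = (if lvl N2 Q2 k (W a) \<noteq> None \<and> lvl N2 Q2 k (W (N1 a j)) = lvl N2 Q2 k (W a) \<and> linkp N2 Q2 (W (N1 a j)) (par (lb Q2 (W (N1 a j)))) (W a) then Some (W (N1 a j)) else None)"
    using lcq st by (simp add: dnF_def)
  have e1: "dnF N1 Q1 k a = (if lvl N1 Q1 k a \<noteq> None \<and> lvl N1 Q1 k (N1 a j) = lvl N1 Q1 k a \<and> linkp N1 Q1 (N1 a j) (par (lb Q1 (N1 a j))) a then Some (N1 a j) else None)"
    using Some by (simp add: dnF_def)
  show ?thesis unfolding orel_def e1 e2 using l1 l2 lk st r by auto
qed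

lemma upF_sim:
  assumes "ok r a" "k + 2 \<le> r"
  shows "orel (r - 1) (upF N1 Q1 k a) (upF N2 Q2 k (W a))"
proof (cases "par (lb Q1 a)")
  case None then show ?thesis using assms by (simp add: upF_def orel_def lb_eq[symmetric])
next
  case (Some j)
  obtain r' where r: "r = Suc r'" using assms by (cases r) auto
  have st: "ok r' (N1 a j) \<and> W (N1 a j) = N2 (W a) j" using okstep assms Some r by blast
  have l1: "lvl N1 Q1 k a = lvl N2 Q2 k (W a)" using lvl_sim assms by simp
  have l2: "lvl N1 Q1 k (N1 a j) = lvl N2 Q2 k (W (N1 a j))" using lvl_sim st assms r by (metis Suc_le_mono add_2_eq_Suc' le_SucI)
  have r'': "ok (Suc (r' - 1)) (N1 a j)" using st okmono assms r by (metis Suc_pred' add_2_eq_Suc' le_add2 not_less_eq_eq zero_less_Suc le_trans less_eq_Suc_le)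
  have lk: "linkp N1 Q1 (N1 a j) (lc (lb Q1 (N1 a j))) a = linkp N2 Q2 (W (N1 a j)) (lc (lb Q2 (W (N1 a j)))) (W a)"
    using linkp_sim[OF r'' assms(1)] st lb_eq by metis
  have lcq: "par (lb Q2 (W a)) = Some j" using Some lb_eq assms(1) by metis
  have e2: "upF N2 Q2 k (W a) = (if lvl N2 Q2 k (W a) \<noteq> None \<and> lvl N2 Q2 k (W (N1 a j)) = lvl N2 Q2 k (W a) \<and> linkp N2 Q2 (W (N1 a j)) (lc (lb Q2 (W (N1 a j)))) (W a) then Some (W (N1 a j)) else None)"
    using lcq st by (simp add: upF_def)
  have e1: "upF N1 Q1 k a = (if lvl N1 Q1 k a \<noteq> None \<and> lvl N1 Q1 k (N1 a j) = lvl N1 Q1 k a \<and> linkp N1 Q1 (N1 a j) (lc (lb Q1 (N1 a j))) a then Some (N1 a j) else None)"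
    using Some by (simp add: upF_def)
  show ?thesis unfolding orel_def e1 e2 using l1 l2 lk st r by auto
qed

lemma rcF_sim:
  assumes "ok r a" "k + 2 \<le> r"
  shows "orel (r - 1) (rcF N1 Q1 k a) (rcF N2 Q2 k (W a))"
proof (cases "rc (lb Q1 a)")
  case None then show ?thesis using assms by (simp add: rcF_def orel_def lb_eq[symmetric])
next
  case (Some j)
  obtain r' where r: "r = Suc r'" using assms by (cases r) auto
  have st: "ok r' (N1 a j) \<and> W (N1 a j) = N2 (W a) j" using okstep assms Some r by blast
  have l1: "lvl N1 Q1 k a = lvl N2 Q2 k (W a)" using lvl_sim assms by simp
  have r'': "ok (Suc (r' - 1)) (N1 a j)" using st okmono assms r by (metis Suc_pred' add_2_eq_Suc' le_add2 not_less_eq_eq zero_less_Suc le_trans less_eq_Suc_le)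
  have lk: "linkp N1 Q1 (N1 a j) (par (lb Q1 (N1 a j))) a = linkp N2 Q2 (W (N1 a j)) (par (lb Q2 (W (N1 a j)))) (W a)"
    using linkp_sim[OF r'' assms(1)] st lb_eq by metis
  have lcq: "rc (lb Q2 (W a)) = Some j" using Some lb_eq assms(1) by metis
  have e2: "rcF N2 Q2 k (W a) = (if lvl N2 Q2 k (W a) \<noteq> None \<and> linkp N2 Q2 (W (N1 a j)) (par (lb Q2 (W (N1 a j)))) (W a) then Some (W (N1 a j)) else None)"
    using lcq st by (simp add: rcF_def)
  have e1: "rcF N1 Q1 k a = (if lvl N1 Q1 k a \<noteq> None \<and> linkp N1 Q1 (N1 a j) (par (lb Q1 (N1 a j))) a then Some (N1 a j) else None)"
    using Some by (simp add: rcF_def)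
  show ?thesis unfolding orel_def e1 e2 using l1 lk st r by auto
qed

lemma goodp_sim:
  assumes "ok r y" "max (k+2) (1 + c) \<le> r"
    and h: "\<And>r' u. ok r' u \<Longrightarrow> c \<le> r' \<Longrightarrow> h1 u = h2 (W u)"
  shows "goodp N1 Q1 k l h1 y = goodp N2 Q2 k l h2 (W y)"
proof -
  have o: "orel (r - 1) (rcF N1 Q1 k y) (rcF N2 Q2 k (W y))" using rcF_sim assms by simp
  show ?thesis
  proof (cases "rcF N1 Q1 k y")
    case None then show ?thesis using o by (simp add: goodp_def orel_def)
  next
    case (Some u)
    then have "ok (r - 1) u" "rcF N2 Q2 k (W y) = Some (W u)" using o by (auto simp: orel_def)
    moreover have "h1 u = h2 (W u)" using h calculation assms by simp
    ultimately show ?thesis using Some by (simp add: goodp_def)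
  qed
qed

definition "ssim s1 s2 cs \<equiv> \<forall>r a. ok r a \<longrightarrow> cs \<le> r \<longrightarrow> orel (r - 1) (s1 a) (s2 (W a))"

lemma dbp_sim:
  assumes g: "\<And>r y. ok r y \<Longrightarrow> G \<le> r \<Longrightarrow> g1 y = g2 (W y)" and G: "k + 2 \<le> G"
  shows "ssim (dbp N1 Q1 k g1) (dbp N2 Q2 k g2) (1 + G)"
  unfolding ssim_def
proof (intro allI impI)
  fix r a assume a: "ok r a" "1 + G \<le> r"
  have ga: "g1 a = g2 (W a)" using g a by simp
  have o: "orel (r - 1) (dnF N1 Q1 k a) (dnF N2 Q2 k (W a))" using dnF_sim a G by simp
  show "orel (r - 1) (dbp N1 Q1 k g1 a) (dbp N2 Q2 k g2 (W a))"
  proof (cases "dnF N1 Q1 k a")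
    case None then show ?thesis using o ga by (simp add: dbp_def orel_def)
  next
    case (Some c)
    then have c: "ok (r - 1) c" "dnF N2 Q2 k (W a) = Some (W c)" using o by (auto simp: orel_def)
    have "g1 c = g2 (W c)" using g c a by simp
    then show ?thesis using Some c ga by (simp add: dbp_def orel_def)
  qed
qed

lemma ubp_sim:
  assumes g: "\<And>r y. ok r y \<Longrightarrow> G \<le> r \<Longrightarrow> g1 y = g2 (W y)" and G: "k + 2 \<le> G"
  shows "ssim (ubp N1 Q1 k g1) (ubp N2 Q2 k g2) (1 + G)"
  unfolding ssim_def
proof (intro allI impI)
  fix r a assume a: "ok r a" "1 + G \<le> r"
  have ga: "g1 a = g2 (W a)" using g a by simp
  have o: "orel (r - 1) (upF N1 Q1 k a) (upF N2 Q2 k (W a))" using upF_sim a G by simp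
  show "orel (r - 1) (ubp N1 Q1 k g1 a) (ubp N2 Q2 k g2 (W a))"
  proof (cases "upF N1 Q1 k a")
    case None then show ?thesis using o ga by (simp add: ubp_def orel_def)
  next
    case (Some c)
    then have c: "ok (r - 1) c" "upF N2 Q2 k (W a) = Some (W c)" using o by (auto simp: orel_def)
    have "g1 c = g2 (W c)" using g c a by simp
    then show ?thesis using Some c ga by (simp add: ubp_def orel_def)
  qed
qed

lemma iter_sim:
  assumes s: "ssim s1 s2 cs"
  shows "ok r a \<Longrightarrow> m + cs \<le> r \<Longrightarrow> orel (r - m) (iter s1 m a) (iter s2 m (W a))"
proof (induction m arbitrary: a r)
  case 0 then show ?case by (simp add: orel_def)
next
  case (Suc m)
  have o: "orel (r - 1) (s1 a) (s2 (W a))" using s Suc.prems unfolding ssim_def by simp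
  show ?case
  proof (cases "s1 a")
    case None then show ?thesis using o by (simp add: orel_def)
  next
    case (Some c)
    then have c: "ok (r - 1) c" "s2 (W a) = Some (W c)" using o by (auto simp: orel_def)
    have "orel (r - 1 - m) (iter s1 m c) (iter s2 m (W c))" using Suc.IH[OF c(1)] Suc.prems by simp
    then show ?thesis using Some c by (simp add: orel_def)
  qed
qed

lemma topw_sim:
  assumes s: "ssim s1 s2 cs"
  shows "ok r a \<Longrightarrow> f + cs \<le> r \<Longrightarrow> orel (r - f) (topw s1 f a) (topw s2 f (W a))"
proof (induction f arbitrary: a r)
  case 0
  have o: "orel (r - 1) (s1 a) (s2 (W a))" using s 0 unfolding ssim_def by simp
  then show ?case using 0 by (cases "s1 a") (auto simp: orel_def)
next
  case (Suc f)
  have o: "orel (r - 1) (s1 a) (s2 (W a))" using s Suc.prems unfolding ssim_def by simp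
  show ?case
  proof (cases "s1 a")
    case None then show ?thesis using o Suc.prems okmono[OF Suc.prems(1), of "r - Suc f"] by (simp add: orel_def)
  next
    case (Some c)
    then have c: "ok (r - 1) c" "s2 (W a) = Some (W c)" using o by (auto simp: orel_def)
    have "orel (r - 1 - f) (topw s1 f c) (topw s2 f (W c))" using Suc.IH[OF c(1)] Suc.prems by simp
    then show ?thesis using Some c by (simp add: orel_def)
  qed
qed

lemma badout_sim:
  assumes su: "ssim ub1 ub2 cs" and sd: "ssim db1 db2 cs" and a: "ok r a" "2*t + cs \<le> r"
  shows "badout t Q1 ub1 db1 a = badout t Q2 ub2 db2 (W a)"
proof -
  have cy: "cycp t Q1 ub1 a = cycp t Q2 ub2 (W a)"
  proof -
    have "\<And>m. m \<in> {1..t} \<Longrightarrow> (\<exists>z. iter ub1 m a = Some z \<and> idn Q1 z = idn Q1 a) = (\<exists>z. iter ub2 m (W a) = Some z \<and> idn Q2 z = idn Q2 (W a))"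
    proof -
      fix m assume m: "m \<in> {1..t}"
      have o: "orel (r - m) (iter ub1 m a) (iter ub2 m (W a))" using iter_sim[OF su a(1)] m a by simp
      show "?thesis m"
      proof (cases "iter ub1 m a")
        case None then show ?thesis using o by (simp add: orel_def)
      next
        case (Some z)
        then have "ok (r - m) z" "iter ub2 m (W a) = Some (W z)" using o by (auto simp: orel_def)
        then show ?thesis using Some idn_eq a by auto
      qed
    qed
    then show ?thesis unfolding cycp_def by blast
  qed
  have o1: "orel (r - t) (topw ub1 t a) (topw ub2 t (W a))" using topw_sim[OF su a(1)] a by simp
  show ?thesis
  proof (cases "topw ub1 t a")
    case None then show ?thesis using o1 cy by (simp add: badout_def orel_def)
  next
    case (Some T)
    then have T: "ok (r - t) T" "topw ub2 t (W a) = Some (W T)" using o1 by (auto simp: orel_def)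
    have o2: "orel (r - t - (t - 1)) (topw db1 (t - 1) T) (topw db2 (t - 1) (W T))"
      using topw_sim[OF sd T(1)] a by simp
    show ?thesis
    proof (cases "topw db1 (t - 1) T")
      case None then show ?thesis using o2 cy Some T by (simp add: badout_def orel_def)
    next
      case (Some b)
      then have "ok (r - t - (t - 1)) b" "topw db2 (t - 1) (W T) = Some (W b)" using o2 by (auto simp: orel_def)
      then show ?thesis using Some \<open>topw ub1 t a = Some T\<close> T cy lb_eq by (simp add: badout_def)
    qed
  qed
qed

lemma oF_sim: "ok r a \<Longrightarrow> costf k t l \<le> r \<Longrightarrow> oF N1 Q1 k t l a = oF N2 Q2 k t l (W a)"
proof (induction l arbitrary: a r)
  case 0 then show ?case by simp
next
  case (Suc l)
  define G where "G = max (k+2) (1 + costf k t l)"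
  have g: "\<And>r y. ok r y \<Longrightarrow> G \<le> r \<Longrightarrow> goodp N1 Q1 k l (oF N1 Q1 k t l) y = goodp N2 Q2 k l (oF N2 Q2 k t l) (W y)"
    using goodp_sim Suc.IH unfolding G_def by blast
  have G: "k + 2 \<le> G" unfolding G_def by simp
  have su: "ssim (ubp N1 Q1 k (goodp N1 Q1 k l (oF N1 Q1 k t l))) (ubp N2 Q2 k (goodp N2 Q2 k l (oF N2 Q2 k t l))) (1 + G)"
    by (rule ubp_sim) (use g G in auto)
  have sd: "ssim (dbp N1 Q1 k (goodp N1 Q1 k l (oF N1 Q1 k t l))) (dbp N2 Q2 k (goodp N2 Q2 k l (oF N2 Q2 k t l))) (1 + G)"
    by (rule dbp_sim) (use g G in auto)
  have c: "costf k t (Suc l) = 2*t + 2 + G" unfolding G_def by simp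
  have ga: "goodp N1 Q1 k l (oF N1 Q1 k t l) a = goodp N2 Q2 k l (oF N2 Q2 k t l) (W a)"
    using g Suc.prems c by simp
  have b: "badout t Q1 (ubp N1 Q1 k (goodp N1 Q1 k l (oF N1 Q1 k t l))) (dbp N1 Q1 k (goodp N1 Q1 k l (oF N1 Q1 k t l))) a
     = badout t Q2 (ubp N2 Q2 k (goodp N2 Q2 k l (oF N2 Q2 k t l))) (dbp N2 Q2 k (goodp N2 Q2 k l (oF N2 Q2 k t l))) (W a)"
    using badout_sim[OF su sd Suc.prems(1)] Suc.prems c by simp
  show ?case using ga b by simp
qed

lemma lvl_le: "lvl N Q f x = Some l \<Longrightarrow> l \<le> f"
  by (induction f arbitrary: x l) (auto split: option.splits)

lemma outF_sim: "ok r a \<Longrightarrow> costf k t k \<le> r \<Longrightarrow> k \<le> r \<Longrightarrow> outF N1 Q1 k t a = outF N2 Q2 k t (W a)"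
  unfolding outF_def using lvl_sim[of r a k] oF_sim costf_mono lvl_le
  by (auto split: option.splits) (meson le_trans)

end

lemma has_level_det: "has_level I v l1 \<Longrightarrow> has_level I v l2 \<Longrightarrow> l1 = l2"
proof (induction arbitrary: l2 rule: has_level.induct)
  case (base v) from base.prems show ?case by (cases rule: has_level.cases) (use base in auto)
next
  case (step v j l)
  from step.prems show ?case
  proof (cases rule: has_level.cases)
    case base then show ?thesis using step.hyps(1) by simp
  next
    case (step j' l')
    then have "j' = j" using step.hyps(1) by simp
    then have "l = l'" using step.IH step(3) \<open>j' = j\<close> by (metis local.step(3))
    then show ?thesis using step by simp
  qed
qed

lemma level_Some: "level I v = Some l \<longleftrightarrow> has_level I v l"
proof
  assume "level I v = Some l"
  then obtain l0 where h: "has_level I v l0" and e: "l = (THE l. has_level I v l)" unfolding level_def by (auto split: if_splits)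
  have "(THE l. has_level I v l) = l0" using h has_level_det by blast
  then show "has_level I v l" using h e by simp
next
  assume h: "has_level I v l"
  have "(THE l. has_level I v l) = l" using h has_level_det by blast
  then show "level I v = Some l" using h unfolding level_def by auto
qed

lemma has_level_rcNone: "rc (lab I v) = None \<Longrightarrow> has_level I v l \<longleftrightarrow> l = 1"
  using has_level.base[of I v] by (auto elim: has_level.cases)

lemma has_level_rcSome: "rc (lab I v) = Some j \<Longrightarrow> has_level I v l \<longleftrightarrow> (\<exists>l'. l = Suc l' \<and> has_level I (port I v j) l')"
  by (auto elim: has_level.cases intro: has_level.step)

lemma lb_obs[simp]: "lb (obs I) x = lab I x" by (simp add: lb_def obs_def)
lemma idn_obs[simp]: "idn (obs I) x = ident I x" by (simp add: idn_def obs_def)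

lemma lvl_glob: "lvl (port I) (obs I) f x = Some l \<longleftrightarrow> has_level I x l \<and> l \<le> f"
proof (induction f arbitrary: x l)
  case 0 then show ?case using has_level.cases by fastforce
next
  case (Suc f)
  show ?case
  proof (cases "rc (lab I x)")
    case None then show ?thesis using has_level_rcNone by auto
  next
    case (Some j)
    show ?thesis using Some Suc.IH has_level_rcSome[OF Some] by (cases l) auto
  qed
qed

lemma has_level_pos: "has_level I x l \<Longrightarrow> 1 \<le> l"
  by (induction rule: has_level.induct) auto

lemma iter_add: "iter s (a + b) x = Option.bind (iter s a x) (iter s b)"
  by (induction a arbitrary: x) (auto split: option.splits)

lemma iter_one: "iter s (Suc 0) x = s x"
  by (cases "s x") auto

lemma iter_Suc2: "iter s (Suc m) x = Option.bind (iter s m x) s"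
proof -
  have e: "iter s (Suc 0) = s" by (rule ext, rule iter_one)
  have "iter s (m + Suc 0) x = Option.bind (iter s m x) (iter s (Suc 0))" by (rule iter_add)
  from this show ?thesis by (simp only: e add.right_neutral add_Suc_right)
qed

lemma iter_None_mono: "iter s m x = None \<Longrightarrow> m \<le> m' \<Longrightarrow> iter s m' x = None"
  using iter_add[of s m "m' - m" x] by simp

lemma topw_Some: "topw s f y = Some T \<Longrightarrow> \<exists>i\<le>f. iter s i y = Some T \<and> s T = None"
proof (induction f arbitrary: y)
  case 0 then show ?case by (auto split: option.splits)
next
  case (Suc f)
  show ?case
  proof (cases "s y")
    case None then show ?thesis using Suc.prems by auto
  next
    case (Some u)
    then have "topw s f u = Some T" using Suc.prems by simp
    then obtain i where "i \<le> f" "iter s i u = Some T" "s T = None" using Suc.IH by blast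
    then show ?thesis using Some by (intro exI[of _ "Suc i"]) auto
  qed
qed

lemma topw_None: "topw s f y = None \<Longrightarrow> \<exists>z. iter s (Suc f) y = Some z"
proof (induction f arbitrary: y)
  case 0 then show ?case by (auto split: option.splits)
next
  case (Suc f)
  then obtain u where u: "s y = Some u" "topw s f u = None" by (auto split: option.splits)
  then obtain z where "iter s (Suc f) u = Some z" using Suc.IH by blast
  then have "iter s (Suc (Suc f)) y = Some z" using u by (simp del: iter.simps(2) add: iter.simps(2)[of s "Suc f" y])
  then show ?case by blast
qed

lemma topw_mono: "topw s f y = Some T \<Longrightarrow> topw s (Suc f) y = Some T"
proof (induction f arbitrary: y)
  case 0 then show ?case by (auto split: option.splits)
next
  case (Suc f)
  show ?case
  proof (cases "s y")
    case None then show ?thesis using Suc.prems by simp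
  next
    case (Some u)
    then have "topw s f u = Some T" using Suc.prems by simp
    then have "topw s (Suc f) u = Some T" using Suc.IH by blast
    then show ?thesis using Some by (simp del: topw.simps(2) add: topw.simps(2)[of s "Suc f" y])
  qed
qed

lemma topw_self: "s y = None \<Longrightarrow> topw s f y = Some y"
  by (cases f) auto

lemma iter_det_aux: "iter s i x = Some y \<Longrightarrow> s y = None \<Longrightarrow> iter s j x = Some z \<Longrightarrow> i < j \<Longrightarrow> False"
proof -
  assume a: "iter s i x = Some y" "s y = None" "iter s j x = Some z" "i < j"
  define m where "m = j - i - 1"
  have m: "j = i + Suc m" using a(4) unfolding m_def by arith
  have "iter s j x = iter s (Suc m) y" using iter_add[of s i "Suc m" x] a(1) m by (simp del: iter.simps)
  also have "\<dots> = None" using a(2) by simp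
  finally show False using a(3) by simp
qed

lemma iter_det: "iter s i x = Some y \<Longrightarrow> s y = None \<Longrightarrow> iter s j x = Some z \<Longrightarrow> s z = None \<Longrightarrow> i = j \<and> y = z"
  using iter_det_aux by (metis linorder_neqE_nat option.inject)

lemma iter_inv:
  assumes h: "\<And>a c. P a \<Longrightarrow> s a = Some c \<Longrightarrow> P c \<and> s' c = Some a"
  shows "P x \<Longrightarrow> iter s i x = Some y \<Longrightarrow> iter s' i y = Some x \<and> P y"
proof (induction i arbitrary: x y)
  case 0 then show ?case by simp
next
  case (Suc i)
  then obtain c where c: "s x = Some c" "iter s i c = Some y" by (auto split: option.splits)
  have "P c \<and> s' c = Some x" using h Suc.prems c by blast
  then have "iter s' i y = Some c \<and> P y" using Suc.IH c by blast
  then show ?case using \<open>P c \<and> s' c = Some x\<close> unfolding iter_Suc2 by simp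
qed

lemma iter_closed:
  assumes h: "\<And>a c. P a \<Longrightarrow> s a = Some c \<Longrightarrow> P c"
  shows "P x \<Longrightarrow> iter s i x = Some y \<Longrightarrow> P y"
proof (induction i arbitrary: x)
  case 0 then show ?case by simp
next
  case (Suc i)
  then obtain c where c: "s x = Some c" "iter s i c = Some y" by (auto split: option.splits)
  then show ?case using Suc h by blast
qed

lemma iter_cancel:
  assumes inj: "\<And>a b c. P a \<Longrightarrow> P b \<Longrightarrow> s a = Some c \<Longrightarrow> s b = Some c \<Longrightarrow> a = b"
    and cl: "\<And>a c. P a \<Longrightarrow> s a = Some c \<Longrightarrow> P c"
  shows "P x \<Longrightarrow> iter s i x = Some z \<Longrightarrow> iter s j x = Some z \<Longrightarrow> i \<le> j \<Longrightarrow> iter s (j - i) x = Some x"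
proof (induction i arbitrary: j z)
  case 0 then show ?case by simp
next
  case (Suc i)
  then obtain j' where j: "j = Suc j'" by (cases j) auto
  obtain a where a: "iter s i x = Some a" "s a = Some z" using Suc.prems(2) unfolding iter_Suc2 by (cases "iter s i x") auto
  obtain b where b: "iter s j' x = Some b" "s b = Some z" using Suc.prems(3) unfolding j iter_Suc2 by (cases "iter s j' x") auto
  have "P a" by (rule iter_closed[of P s x i a]) (use cl Suc.prems(1) a(1) in auto)
  have "P b" by (rule iter_closed[of P s x j' b]) (use cl Suc.prems(1) b(1) in auto)
  have "a = b" using inj[OF \<open>P a\<close> \<open>P b\<close>] a b by blast
  have "iter s (j' - i) x = Some x"
    by (rule Suc.IH[where z=a]) (use Suc.prems(1,4) a(1) b(1) \<open>a = b\<close> j in auto)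
  then show ?case using j by simp
qed

locale glob =
  fixes \<Delta> :: nat and \<alpha> :: real and n :: nat and I :: inst and k :: nat and t :: nat
  assumes vg: "valid_graph \<Delta> \<alpha> n I" and ct: "colored_tree_labeling \<Delta> n I"
    and k1: "1 \<le> k" and t1: "1 \<le> t" and big: "n < (t+1)^k"
begin

abbreviation "NG \<equiv> port I"
abbreviation "QG \<equiv> obs I"
abbreviation "lk x \<equiv> lvl NG QG k x"

lemma lk_iff: "lk x = Some l \<longleftrightarrow> level I x = Some l \<and> l \<le> k"
  using lvl_glob level_Some by auto

lemma lk_pos: "lk x = Some l \<Longrightarrow> 1 \<le> l"
  using lvl_glob has_level_pos by blast

lemma port_lt: "x < n \<Longrightarrow> 1 \<le> j \<Longrightarrow> j \<le> deg I x \<Longrightarrow> port I x j < n"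
  using vg unfolding valid_graph_def by blast

lemma deg_le: "x < n \<Longrightarrow> deg I x \<le> \<Delta>"
  using vg unfolding valid_graph_def by blast

lemma port_inj: "x < n \<Longrightarrow> j1 \<in> {1..deg I x} \<Longrightarrow> j2 \<in> {1..deg I x} \<Longrightarrow> port I x j1 = port I x j2 \<Longrightarrow> j1 = j2"
proof -
  assume a: "x < n" "j1 \<in> {1..deg I x}" "j2 \<in> {1..deg I x}" "port I x j1 = port I x j2"
  have "\<forall>v<n. inj_on (port I v) {1..deg I v}" using vg by (simp add: valid_graph_def)
  then show ?thesis using a by (meson inj_onD)
qed

lemma ident_inj: "x < n \<Longrightarrow> y < n \<Longrightarrow> ident I x = ident I y \<Longrightarrow> x = y"
proof -
  assume a: "x < n" "y < n" "ident I x = ident I y"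
  have "inj_on (ident I) {0..<n}" using vg by (simp add: valid_graph_def)
  then show ?thesis using a by (auto dest: inj_onD)
qed

lemma ct_v: "x < n \<Longrightarrow> valid_port_label \<Delta> I x (par (lab I x)) \<and>
            valid_port_label \<Delta> I x (lc (lab I x)) \<and>
            valid_port_label \<Delta> I x (rc (lab I x)) \<and>
            (par (lab I x) \<noteq> None \<longrightarrow> par (lab I x) \<noteq> lc (lab I x)) \<and>
            (par (lab I x) \<noteq> None \<longrightarrow> par (lab I x) \<noteq> rc (lab I x)) \<and>
            (lc (lab I x) \<noteq> None \<longrightarrow> lc (lab I x) \<noteq> rc (lab I x)) \<and>
            cin (lab I x) \<in> {R, B}"
  using ct unfolding colored_tree_labeling_def by blast

lemma lab_port:
  assumes "x < n" "par (lab I x) = Some j \<or> lc (lab I x) = Some j \<or> rc (lab I x) = Some j"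
  shows "1 \<le> j" "j \<le> deg I x" "j \<le> \<Delta>" "port I x j < n"
  using ct_v[OF assms(1)] assms port_lt unfolding valid_port_label_def by blast+

lemma cin_RB: "x < n \<Longrightarrow> cin (lab I x) \<in> {R, B}" using ct_v by blast

lemma port_diff:
  assumes "x < n" "p1 = Some j1" "p2 = Some j2" "p1 \<noteq> p2"
    "p1 = par (lab I x) \<or> p1 = lc (lab I x) \<or> p1 = rc (lab I x)"
    "p2 = par (lab I x) \<or> p2 = lc (lab I x) \<or> p2 = rc (lab I x)"
  shows "port I x j1 \<noteq> port I x j2"
proof
  assume e: "port I x j1 = port I x j2"
  have "j1 \<in> {1..deg I x}" "j2 \<in> {1..deg I x}" using lab_port[OF assms(1)] assms by (metis atLeastAtMost_iff)+
  then have "j1 = j2" using port_inj assms(1) e by blast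
  then show False using assms by simp
qed

lemma linkp_glob:
  assumes "c < n" "x < n" "p = par (lab I c) \<or> p = lc (lab I c)"
  shows "linkp NG QG c p x \<longleftrightarrow> (\<exists>j. p = Some j \<and> port I c j = x)"
proof (cases p)
  case None then show ?thesis by (simp add: linkp_def)
next
  case (Some j)
  have "port I c j < n" using lab_port assms Some by metis
  then show ?thesis using Some ident_inj assms by (auto simp: linkp_def)
qed

lemma dnF_glob: assumes "x < n" shows "dnF NG QG k x = LCk I k x"
proof (cases "lc (lab I x)")
  case None then show ?thesis by (simp add: dnF_def LCk_def eff_def nbr_def)
next
  case (Some j)
  let ?c = "port I x j"
  have c: "?c < n" using lab_port assms Some by metis
  have lk: "linkp NG QG ?c (par (lab I ?c)) x \<longleftrightarrow> nbr I ?c (par (lab I ?c)) = Some x"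
    using linkp_glob[OF c assms] by (auto simp: nbr_def)
  have n1: "\<not> gk_child I k x ?c"
  proof
    assume "gk_child I k x ?c"
    then obtain j' where "par (lab I x) = Some j'" "port I x j' = ?c" by (auto simp: gk_child_def nbr_def)
    then show False using port_diff[OF assms, of "par (lab I x)" j' "lc (lab I x)" j] Some ct_v[OF assms] by auto
  qed
  have n2: "rc (lab I x) = Some j2 \<Longrightarrow> port I x j2 \<noteq> ?c" for j2
    using port_diff[OF assms, of "rc (lab I x)" j2 "lc (lab I x)" j] Some ct_v[OF assms] by auto
  have "gk_edge I k x ?c \<longleftrightarrow> (lk x \<noteq> None \<and> lk ?c = lk x \<and> linkp NG QG ?c (par (lab I ?c)) x)"
  proof -
    have "gk_child I k ?c x \<longleftrightarrow> (\<exists>l. level I ?c = Some l \<and> level I x = Some l \<and> l \<le> k) \<and> nbr I ?c (par (lab I ?c)) = Some x"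
      unfolding gk_child_def using n2 Some by (auto simp: nbr_def)
    also have "\<dots> \<longleftrightarrow> (lk x \<noteq> None \<and> lk ?c = lk x \<and> linkp NG QG ?c (par (lab I ?c)) x)"
    proof -
      have "(\<exists>l. level I ?c = Some l \<and> level I x = Some l \<and> l \<le> k) \<longleftrightarrow> (lk x \<noteq> None \<and> lk ?c = lk x)"
      proof
        assume "\<exists>l. level I ?c = Some l \<and> level I x = Some l \<and> l \<le> k"
        then obtain l where "level I ?c = Some l" "level I x = Some l" "l \<le> k" by blast
        then have "lk ?c = Some l" "lk x = Some l" using lk_iff by blast+
        then show "lk x \<noteq> None \<and> lk ?c = lk x" by simp
      next
        assume a: "lk x \<noteq> None \<and> lk ?c = lk x"
        then obtain l where "lk x = Some l" by blast
        then have "lk ?c = Some l" "lk x = Some l" using a by auto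
        then show "\<exists>l. level I ?c = Some l \<and> level I x = Some l \<and> l \<le> k" using lk_iff by blast
      qed
      then show ?thesis using lk by blast
    qed
    finally show ?thesis unfolding gk_edge_def using n1 by blast
  qed
  then show ?thesis using Some by (simp add: dnF_def LCk_def eff_def nbr_def)
qed


lemma LCk_props:
  assumes "x < n" "LCk I k x = Some c"
  shows "c < n" "lk c = lk x" "lk x \<noteq> None" "\<exists>j. par (lab I c) = Some j \<and> port I c j = x"
    "\<exists>j. lc (lab I x) = Some j \<and> port I x j = c"
proof -
  have d: "dnF NG QG k x = Some c" using dnF_glob assms by simp
  then obtain j where j: "lc (lab I x) = Some j" and c: "c = port I x j"
    and cond: "lk x \<noteq> None \<and> lk c = lk x \<and> linkp NG QG c (par (lab I c)) x"
    by (auto simp: dnF_def split: option.splits if_splits)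
  show cn: "c < n" using lab_port[OF assms(1)] j c by metis
  show "lk c = lk x" "lk x \<noteq> None" using cond by auto
  show "\<exists>j. par (lab I c) = Some j \<and> port I c j = x" using cond linkp_glob[OF cn assms(1)] by blast
  show "\<exists>j. lc (lab I x) = Some j \<and> port I x j = c" using j c by blast
qed

lemma upF_glob:
  assumes "c < n"
  shows "upF NG QG k c = Some x \<longleftrightarrow> x < n \<and> LCk I k x = Some c"
proof
  assume u: "upF NG QG k c = Some x"
  then obtain j where j: "par (lab I c) = Some j" and x: "x = port I c j"
    and cond: "lk c \<noteq> None \<and> lk x = lk c \<and> linkp NG QG x (lc (lab I x)) c"
    by (auto simp: upF_def split: option.splits if_splits)
  have xn: "x < n" using lab_port[OF assms] j x by metis
  obtain j' where j': "lc (lab I x) = Some j'" "port I x j' = c" using cond linkp_glob[OF xn assms] by blast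
  have "linkp NG QG c (par (lab I c)) x" using linkp_glob[OF assms xn] j x by blast
  then have "dnF NG QG k x = Some c" using j' cond by (simp add: dnF_def)
  then show "x < n \<and> LCk I k x = Some c" using dnF_glob xn by simp
next
  assume a: "x < n \<and> LCk I k x = Some c"
  have xn: "x < n" using a by simp
  have lcx: "LCk I k x = Some c" using a by simp
  obtain j where j: "par (lab I c) = Some j" "port I c j = x" using LCk_props(4)[OF xn lcx] by blast
  have "\<exists>j. lc (lab I x) = Some j \<and> port I x j = c" using LCk_props(5)[OF xn lcx] .
  then have "linkp NG QG x (lc (lab I x)) c" using linkp_glob[OF xn assms, of "lc (lab I x)"] by simp
  then show "upF NG QG k c = Some x" using j LCk_props(2,3)[OF xn lcx] by (simp add: upF_def)
qed

lemma rcF_glob: assumes "x < n" shows "rcF NG QG k x = RCk I k x"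
proof (cases "rc (lab I x)")
  case None then show ?thesis by (simp add: rcF_def RCk_def eff_def nbr_def)
next
  case (Some j)
  let ?c = "port I x j"
  have c: "?c < n" using lab_port assms Some by metis
  have lk: "linkp NG QG ?c (par (lab I ?c)) x \<longleftrightarrow> nbr I ?c (par (lab I ?c)) = Some x"
    using linkp_glob[OF c assms] by (auto simp: nbr_def)
  have n1: "\<not> gk_child I k x ?c"
  proof
    assume "gk_child I k x ?c"
    then obtain j' where "par (lab I x) = Some j'" "port I x j' = ?c" by (auto simp: gk_child_def nbr_def)
    then show False using port_diff[OF assms, of "par (lab I x)" j' "rc (lab I x)" j] Some ct_v[OF assms] by auto
  qed
  have n2: "lc (lab I x) = Some j2 \<Longrightarrow> port I x j2 \<noteq> ?c" for j2
    using port_diff[OF assms, of "lc (lab I x)" j2 "rc (lab I x)" j] Some ct_v[OF assms] by auto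
  have hl: "has_level I x L \<longleftrightarrow> (\<exists>l'. L = Suc l' \<and> has_level I ?c l')" for L
    using has_level_rcSome[OF Some] .
  have "gk_child I k ?c x \<longleftrightarrow> (\<exists>l. level I ?c = Some l \<and> level I x = Some (Suc l) \<and> Suc l \<le> k) \<and> nbr I ?c (par (lab I ?c)) = Some x"
    unfolding gk_child_def using n2 Some by (auto simp: nbr_def)
  also have "\<dots> \<longleftrightarrow> lk x \<noteq> None \<and> linkp NG QG ?c (par (lab I ?c)) x"
  proof -
    have "(\<exists>l. level I ?c = Some l \<and> level I x = Some (Suc l) \<and> Suc l \<le> k) \<longleftrightarrow> lk x \<noteq> None"
    proof
      assume "\<exists>l. level I ?c = Some l \<and> level I x = Some (Suc l) \<and> Suc l \<le> k"
      then show "lk x \<noteq> None" using lk_iff by blast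
    next
      assume "lk x \<noteq> None"
      then obtain L where "lk x = Some L" by blast
      then have "has_level I x L" "L \<le> k" using lvl_glob by auto
      then obtain l' where "L = Suc l'" "has_level I ?c l'" using hl by blast
      then show "\<exists>l. level I ?c = Some l \<and> level I x = Some (Suc l) \<and> Suc l \<le> k"
        using level_Some \<open>has_level I x L\<close> \<open>L \<le> k\<close> by blast
    qed
    then show ?thesis using lk by blast
  qed
  finally have "gk_edge I k x ?c \<longleftrightarrow> lk x \<noteq> None \<and> linkp NG QG ?c (par (lab I ?c)) x"
    unfolding gk_edge_def using n1 by blast
  then show ?thesis using Some by (simp add: rcF_def RCk_def eff_def nbr_def)
qed

lemma RCk_props:
  assumes "x < n" "RCk I k x = Some u" "lk x = Some L"
  shows "u < n" "\<exists>j. par (lab I u) = Some j \<and> port I u j = x" "\<exists>j. rc (lab I x) = Some j \<and> port I x j = u"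
    "\<exists>l. L = Suc l \<and> lk u = Some l"
proof -
  have d: "rcF NG QG k x = Some u" using rcF_glob assms by simp
  then obtain j where j: "rc (lab I x) = Some j" and c: "u = port I x j"
    and cond: "lk x \<noteq> None \<and> linkp NG QG u (par (lab I u)) x"
    by (auto simp: rcF_def split: option.splits if_splits)
  show cn: "u < n" using lab_port[OF assms(1)] j c by metis
  show "\<exists>j. par (lab I u) = Some j \<and> port I u j = x" using cond linkp_glob[OF cn assms(1)] by blast
  show "\<exists>j. rc (lab I x) = Some j \<and> port I x j = u" using j c by blast
  have "has_level I x L" "L \<le> k" using assms(3) lvl_glob by auto
  then obtain l' where "L = Suc l'" "has_level I u l'" using has_level_rcSome[OF j] c by blast
  then show "\<exists>l. L = Suc l \<and> lk u = Some l" using lvl_glob \<open>L \<le> k\<close> by auto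
qed

lemma RC_top:
  assumes "y < n" "RCk I k y = Some u" "x < n" "LCk I k x = Some u" "lk y = Some L"
  shows False
proof -
  obtain j1 where j1: "par (lab I u) = Some j1" "port I u j1 = y" using RCk_props(2)[OF assms(1,2,5)] by blast
  obtain j2 where j2: "par (lab I u) = Some j2" "port I u j2 = x" using LCk_props(4)[OF assms(3,4)] by blast
  have "x = y" using j1 j2 by simp
  obtain a where a: "rc (lab I y) = Some a" "port I y a = u" using RCk_props(3)[OF assms(1,2,5)] by blast
  obtain b where b: "lc (lab I y) = Some b" "port I y b = u" using LCk_props(5)[OF assms(3,4)] \<open>x = y\<close> by blast
  show False using port_diff[OF assms(1), of "lc (lab I y)" b "rc (lab I y)" a] a b ct_v[OF assms(1)] by auto
qed

lemma RC_inj: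
  assumes "y1 < n" "y2 < n" "RCk I k y1 = Some u" "RCk I k y2 = Some u" "lk y1 = Some L1" "lk y2 = Some L2"
  shows "y1 = y2"
  using RCk_props(2)[OF assms(1,3,5)] RCk_props(2)[OF assms(2,4,6)] by auto


definition "gd l = goodp NG QG k l (oF NG QG k t l)"
definition "dbg l = dbp NG QG k (gd l)"
definition "ubg l = ubp NG QG k (gd l)"
definition "Bo l = badout t QG (ubg l) (dbg l)"

lemma oF_Suc: "oF NG QG k t (Suc l) x = (if gd l x then X else Bo l x)"
  by (simp add: gd_def Bo_def ubg_def dbg_def)

lemma dbg_iff: "a < n \<Longrightarrow> dbg l a = Some c \<longleftrightarrow> \<not> gd l a \<and> \<not> gd l c \<and> LCk I k a = Some c"
  by (auto simp: dbg_def dbp_def dnF_glob split: option.splits)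

lemma ubg_iff: "c < n \<Longrightarrow> ubg l c = Some a \<longleftrightarrow> \<not> gd l c \<and> \<not> gd l a \<and> a < n \<and> LCk I k a = Some c"
proof -
  assume c: "c < n"
  have "ubg l c = Some a \<longleftrightarrow> \<not> gd l c \<and> upF NG QG k c = Some a \<and> \<not> gd l a"
    by (auto simp: ubg_def ubp_def split: option.splits)
  then show ?thesis using upF_glob[OF c] by blast
qed

lemma db_ub: "a < n \<Longrightarrow> c < n \<Longrightarrow> dbg l a = Some c \<longleftrightarrow> ubg l c = Some a"
  using dbg_iff ubg_iff by blast

lemma dbg_cl: "a < n \<Longrightarrow> dbg l a = Some c \<Longrightarrow> c < n \<and> lk c = lk a \<and> \<not> gd l c \<and> \<not> gd l a \<and> ubg l c = Some a"
  using dbg_iff LCk_props db_ub by metis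

lemma ubg_cl: "c < n \<Longrightarrow> ubg l c = Some a \<Longrightarrow> a < n \<and> lk c = lk a \<and> \<not> gd l c \<and> \<not> gd l a \<and> dbg l a = Some c"
  using ubg_iff LCk_props db_ub by metis

lemma ub_inv: "a < n \<Longrightarrow> iter (ubg l) i a = Some y \<Longrightarrow> iter (dbg l) i y = Some a \<and> y < n"
  by (rule iter_inv[where P="\<lambda>a. a < n"]) (use ubg_cl in auto)

lemma db_inv: "a < n \<Longrightarrow> iter (dbg l) i a = Some y \<Longrightarrow> iter (ubg l) i y = Some a \<and> y < n"
  by (rule iter_inv[where P="\<lambda>a. a < n"]) (use dbg_cl in auto)

lemma cyc_glob: "a < n \<Longrightarrow> cycp t QG (ubg l) a \<longleftrightarrow> (\<exists>m\<in>{1..t}. iter (ubg l) m a = Some a)"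
proof -
  assume a: "a < n"
  have "\<And>m z. iter (ubg l) m a = Some z \<Longrightarrow> z < n" using ub_inv a by blast
  then show ?thesis unfolding cycp_def using ident_inj a by (metis idn_obs)
qed

lemma iter_ub_pred: "iter (ubg l) (Suc m) a = Some b \<Longrightarrow> \<exists>y. iter (ubg l) m a = Some y \<and> ubg l y = Some b"
  unfolding iter_Suc2 by (cases "iter (ubg l) m a") auto

lemma iter_db_pred: "iter (dbg l) (Suc m) a = Some b \<Longrightarrow> \<exists>y. iter (dbg l) m a = Some y \<and> dbg l y = Some b"
  unfolding iter_Suc2 by (cases "iter (dbg l) m a") auto

lemma K1:
  assumes a: "a < n" and d: "dbg l a = None"
  shows "Bo l a \<in> {cin (lab I a), D}"
proof -
  have nc: "\<not> cycp t QG (ubg l) a"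
  proof
    assume "cycp t QG (ubg l) a"
    then obtain m where m: "m \<in> {1..t}" "iter (ubg l) m a = Some a" using cyc_glob a by blast
    then obtain m' where "m = Suc m'" by (cases m) auto
    then obtain y where y: "iter (ubg l) m' a = Some y" "ubg l y = Some a" using iter_ub_pred m by blast
    have "y < n" using ub_inv a y by blast
    then show False using ubg_cl y d by simp
  qed
  show ?thesis
  proof (cases "topw (ubg l) t a")
    case None then show ?thesis using nc by (simp add: Bo_def badout_def)
  next
    case (Some T)
    then obtain i where i: "iter (ubg l) i a = Some T" "ubg l T = None" using topw_Some by blast
    have iT: "iter (dbg l) i T = Some a" using ub_inv a i by blast
    show ?thesis
    proof (cases "topw (dbg l) (t - 1) T")
      case None then show ?thesis using nc Some by (simp add: Bo_def badout_def)
    next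
      case (Some b)
      then obtain j where "iter (dbg l) j T = Some b" "dbg l b = None" using topw_Some by blast
      then have "b = a" using iter_det iT d by blast
      then show ?thesis using nc Some \<open>topw (ubg l) t a = Some T\<close> by (simp add: Bo_def badout_def)
    qed
  qed
qed

lemma K3: assumes a: "a < n" shows "Bo l a \<in> {R, B, D}"
proof -
  have "\<And>T b. topw (ubg l) t a = Some T \<Longrightarrow> topw (dbg l) (t - 1) T = Some b \<Longrightarrow> cin (lab I b) \<in> {R, B}"
  proof -
    fix T b assume T: "topw (ubg l) t a = Some T" and b: "topw (dbg l) (t - 1) T = Some b"
    obtain i where "iter (ubg l) i a = Some T" using topw_Some T by blast
    then have Tn: "T < n" using ub_inv a by blast
    obtain j where "iter (dbg l) j T = Some b" using topw_Some b by blast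
    then have "b < n" using db_inv Tn by blast
    then show "cin (lab I b) \<in> {R, B}" using cin_RB by blast
  qed
  then show ?thesis unfolding Bo_def badout_def by (auto split: option.splits)
qed


lemma K2:
  assumes a: "a < n" and c: "c < n" and d: "dbg l a = Some c"
  shows "Bo l a = Bo l c"
proof -
  have uc: "ubg l c = Some a" using db_ub a c d by blast
  have front: "iter (ubg l) (Suc m) c = iter (ubg l) m a" for m using uc by simp
  have cyc: "cycp t QG (ubg l) a \<longleftrightarrow> cycp t QG (ubg l) c"
  proof -
    have "(\<exists>m\<in>{1..t}. iter (ubg l) m a = Some a) \<longleftrightarrow> (\<exists>m\<in>{1..t}. iter (ubg l) m c = Some c)"
    proof
      assume "\<exists>m\<in>{1..t}. iter (ubg l) m a = Some a"
      then obtain m where m: "m \<in> {1..t}" "iter (ubg l) m a = Some a" by blast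
      then obtain m' where m': "m = Suc m'" by (cases m) auto
      then obtain y where y: "iter (ubg l) m' a = Some y" "ubg l y = Some a" using iter_ub_pred m by blast
      have yn: "y < n" using ub_inv a y by blast
      have "dbg l a = Some y" using ubg_cl[OF yn y(2)] by blast
      then have "y = c" using d by simp
      then have "iter (ubg l) m c = Some c" using front m' y by simp
      then show "\<exists>m\<in>{1..t}. iter (ubg l) m c = Some c" using m by blast
    next
      assume "\<exists>m\<in>{1..t}. iter (ubg l) m c = Some c"
      then obtain m where m: "m \<in> {1..t}" "iter (ubg l) m c = Some c" by blast
      have "iter (ubg l) (Suc m) c = Some a" unfolding iter_Suc2 using m uc by simp
      then have "iter (ubg l) m a = Some a" using front by simp
      then show "\<exists>m\<in>{1..t}. iter (ubg l) m a = Some a" using m by blast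
    qed
    then show ?thesis using cyc_glob a c by blast
  qed
  show ?thesis
  proof (cases "cycp t QG (ubg l) a")
    case True then show ?thesis using cyc by (simp add: Bo_def badout_def)
  next
    case False
    then have nc: "\<not> cycp t QG (ubg l) a" "\<not> cycp t QG (ubg l) c" using cyc by auto
    obtain t' where t': "t = Suc t'" using t1 by (cases t) auto
    have tc: "topw (ubg l) t c = topw (ubg l) t' a" using t' uc by simp
    show ?thesis
    proof (cases "topw (ubg l) t' a")
      case (Some T)
      then have "topw (ubg l) t a = Some T" using topw_mono t' by blast
      then show ?thesis using nc tc Some by (simp add: Bo_def badout_def)
    next
      case None
      then obtain z where z: "iter (ubg l) t a = Some z" using topw_None t' by blast
      have Bc: "Bo l c = D" using nc tc None by (simp add: Bo_def badout_def)
      show ?thesis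
      proof (cases "topw (ubg l) t a")
        case None then show ?thesis using nc Bc by (simp add: Bo_def badout_def)
      next
        case (Some T)
        then obtain i where i: "i \<le> t" "iter (ubg l) i a = Some T" "ubg l T = None" using topw_Some by blast
        have "i = t"
        proof (rule ccontr)
          assume "i \<noteq> t" then have "Suc i \<le> t" using i by simp
          have nn: "iter (ubg l) (Suc i) a = None" unfolding iter_Suc2 using i by simp
          show False using iter_None_mono[OF nn \<open>Suc i \<le> t\<close>] z by simp
        qed
        have iT: "iter (dbg l) t T = Some a" using ub_inv a i \<open>i = t\<close> by blast
        have iT2: "iter (dbg l) (Suc t) T = Some c" unfolding iter_Suc2 using iT d by simp
        have "topw (dbg l) (t - 1) T = None"
        proof (rule ccontr)
          assume "topw (dbg l) (t - 1) T \<noteq> None"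
          then obtain b where "topw (dbg l) (t - 1) T = Some b" by blast
          then obtain j where j: "j \<le> t - 1" "iter (dbg l) j T = Some b" "dbg l b = None" using topw_Some by blast
          have "j < Suc t" using j(1) by simp
          then show False using iter_det_aux[OF j(2,3) iT2] by blast
        qed
        then show ?thesis using nc Bc Some by (simp add: Bo_def badout_def)
      qed
    qed
  qed
qed

lemma K4:
  assumes u: "u < n" and nu: "ubg l u = None" and D: "Bo l u = D"
  shows "j \<le> t \<Longrightarrow> \<exists>z. iter (dbg l) j u = Some z"
proof -
  assume j: "j \<le> t"
  have nc: "\<not> cycp t QG (ubg l) u"
  proof
    assume "cycp t QG (ubg l) u"
    then obtain m where m: "m \<in> {1..t}" "iter (ubg l) m u = Some u" using cyc_glob u by blast
    then obtain m' where "m = Suc m'" by (cases m) auto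
    then show False using m nu by simp
  qed
  have "topw (ubg l) t u = Some u" using topw_self nu by blast
  have "topw (dbg l) (t - 1) u = None"
  proof (rule ccontr)
    assume "topw (dbg l) (t - 1) u \<noteq> None"
    then obtain b where b: "topw (dbg l) (t - 1) u = Some b" by blast
    then obtain j where "iter (dbg l) j u = Some b" using topw_Some by blast
    then have "b < n" using db_inv u by blast
    then have "cin (lab I b) \<noteq> D" using cin_RB by fastforce
    then show False using D nc b \<open>topw (ubg l) t u = Some u\<close> by (simp add: Bo_def badout_def)
  qed
  then obtain z where "iter (dbg l) (Suc (t - 1)) u = Some z" using topw_None by blast
  then have z: "iter (dbg l) t u = Some z" using t1 by simp
  show ?thesis
  proof (rule ccontr)
    assume "\<not> (\<exists>z. iter (dbg l) j u = Some z)"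
    then have "iter (dbg l) j u = None" by simp
    then show False using iter_None_mono j z by fastforce
  qed
qed


lemma top_chain_aux:
  assumes "u1 < n" "u2 < n" "ubg l u1 = None" "iter (dbg l) j1 u1 = Some z" "iter (dbg l) j2 u2 = Some z" "j1 \<le> j2"
  shows "j1 = j2 \<and> u1 = u2"
proof -
  have z1: "iter (ubg l) j1 z = Some u1" using db_inv assms by blast
  have z2: "iter (ubg l) j2 z = Some u2" using db_inv assms by blast
  have "iter (ubg l) (j1 + (j2 - j1)) z = iter (ubg l) (j2 - j1) u1" using iter_add[of "ubg l" j1 "j2 - j1" z] z1 by simp
  then have e: "iter (ubg l) (j2 - j1) u1 = Some u2" using z2 assms(6) by simp
  have "j2 - j1 = 0"
  proof (rule ccontr)
    assume "j2 - j1 \<noteq> 0"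
    then obtain m where "j2 - j1 = Suc m" by (cases "j2 - j1") auto
    then show False using e assms(3) by simp
  qed
  then show ?thesis using e assms(6) by simp
qed

lemma top_chain_inj:
  assumes "u1 < n" "u2 < n" "ubg l u1 = None" "ubg l u2 = None" "iter (dbg l) j1 u1 = Some z" "iter (dbg l) j2 u2 = Some z"
  shows "j1 = j2 \<and> u1 = u2"
proof (cases "j1 \<le> j2")
  case True then show ?thesis using top_chain_aux assms by blast
next
  case False then show ?thesis using top_chain_aux[of u2 u1 l j2 z j1] assms by simp
qed

lemma gd_Suc_fail:
  assumes "y < n" "\<not> gd (Suc l) y"
  shows "\<exists>u. RCk I k y = Some u \<and> oF NG QG k t (Suc l) u = D"
proof -
  have e: "gd (Suc l) y = (case RCk I k y of None \<Rightarrow> True | Some u \<Rightarrow> oF NG QG k t (Suc l) u \<noteq> D)"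
    using rcF_glob[OF assms(1)] by (simp add: gd_def goodp_def del: oF.simps)
  show ?thesis using assms(2) unfolding e by (auto split: option.splits simp del: oF.simps)
qed

lemma CNT: "S \<subseteq> {a. a < n \<and> lk a = Some (Suc l) \<and> \<not> gd l a} \<Longrightarrow> card S * (t+1)^l \<le> n"
proof (induction l arbitrary: S)
  case 0
  have "S \<subseteq> {..<n}" using 0 by auto
  then show ?case using card_mono[of "{..<n}" S] by simp
next
  case (Suc l)
  have Sf: "finite S" using Suc.prems finite_subset[of S "{..<n}"] by auto
  define ru where "ru y = the (RCk I k y)" for y
  have ruP: "ru y < n \<and> lk (ru y) = Some (Suc l) \<and> \<not> gd l (ru y) \<and> Bo l (ru y) = D \<and> ubg l (ru y) = None
      \<and> RCk I k y = Some (ru y)" if y: "y \<in> S" for y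
  proof -
    have yn: "y < n" "lk y = Some (Suc (Suc l))" "\<not> gd (Suc l) y" using Suc.prems y by auto
    obtain u where u: "RCk I k y = Some u" "oF NG QG k t (Suc l) u = D" using gd_Suc_fail yn by blast
    have ru: "ru y = u" using u ru_def by simp
    have un: "u < n" using RCk_props(1)[OF yn(1) u(1) yn(2)] .
    obtain l' where "Suc (Suc l) = Suc l'" "lk u = Some l'" using RCk_props(4)[OF yn(1) u(1) yn(2)] by blast
    then have lu: "lk u = Some (Suc l)" by simp
    have gB: "\<not> gd l u" "Bo l u = D" using u(2) oF_Suc[of l u] by (auto split: if_splits)
    have "ubg l u = None"
    proof (rule ccontr)
      assume "ubg l u \<noteq> None"
      then obtain a where a: "ubg l u = Some a" by blast
      then have "a < n" "LCk I k a = Some u" using ubg_iff un by blast+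
      then show False using RC_top[OF yn(1) u(1) _ _ yn(2)] by blast
    qed
    then show ?thesis using ru un lu gB u by simp
  qed
  define f where "f p = the (iter (dbg l) (snd p) (ru (fst p)))" for p
  have fdef: "iter (dbg l) j (ru y) = Some (f (y, j))" if yS: "y \<in> S" and jt: "j \<le> t" for y j
  proof -
    have rp: "ru y < n" "ubg l (ru y) = None" "Bo l (ru y) = D" using ruP[OF yS] by auto
    obtain z where "iter (dbg l) j (ru y) = Some z" using K4[OF rp jt] by blast
    then show ?thesis unfolding f_def by simp
  qed
  have inj: "inj_on f (S \<times> {0..t})"
  proof (rule inj_onI)
    fix p q assume p: "p \<in> S \<times> {0..t}" and q: "q \<in> S \<times> {0..t}" and e: "f p = f q"
    obtain y1 j1 where p': "p = (y1, j1)" by (cases p)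
    obtain y2 j2 where q': "q = (y2, j2)" by (cases q)
    have i1: "iter (dbg l) j1 (ru y1) = Some (f p)" using fdef p p' by auto
    have i2: "iter (dbg l) j2 (ru y2) = Some (f p)" using fdef q q' e by auto
    have "j1 = j2 \<and> ru y1 = ru y2" using top_chain_inj[OF _ _ _ _ i1 i2] ruP p q p' q' by auto
    moreover have "y1 = y2"
    proof -
      have a: "y1 < n" "y2 < n" "lk y1 = Some (Suc (Suc l))" "lk y2 = Some (Suc (Suc l))" using Suc.prems p q p' q' by auto
      show ?thesis using RC_inj[OF a(1,2) _ _ a(3,4)] ruP p q p' q' calculation by auto
    qed
    ultimately show "p = q" using p' q' by simp
  qed
  have sub: "f ` (S \<times> {0..t}) \<subseteq> {a. a < n \<and> lk a = Some (Suc l) \<and> \<not> gd l a}"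
  proof
    fix z assume "z \<in> f ` (S \<times> {0..t})"
    then obtain y j where yj: "y \<in> S" "j \<le> t" "z = f (y, j)" by auto
    have it: "iter (dbg l) j (ru y) = Some z" using fdef yj by simp
    have "(\<lambda>a. a < n \<and> lk a = Some (Suc l) \<and> \<not> gd l a) z"
      by (rule iter_closed[OF _ _ it]) (use dbg_cl ruP yj in auto)
    then show "z \<in> {a. a < n \<and> lk a = Some (Suc l) \<and> \<not> gd l a}" by simp
  qed
  have "card (f ` (S \<times> {0..t})) * (t+1)^l \<le> n" using Suc.IH sub by blast
  moreover have "card (f ` (S \<times> {0..t})) = card S * (t+1)" using card_image[OF inj] card_cartesian_product[of S "{0..t}"] by simp
  ultimately have "card S * (t+1) * (t+1)^l \<le> n" by simp
  moreover have "card S * (t+1)^(Suc l) = card S * (t+1) * (t+1)^l" by (simp only: power_Suc ac_simps)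
  ultimately show ?case by linarith
qed


lemma no_big:
  assumes "inj_on g {0..t}" "g ` {0..t} \<subseteq> {a. a < n \<and> lk a = Some (Suc l) \<and> \<not> gd l a}" "Suc l = k"
  shows False
proof -
  have "card (g ` {0..t}) * (t+1)^l \<le> n" using CNT assms(2) by blast
  moreover have "card (g ` {0..t}) = t + 1" using card_image[OF assms(1)] by simp
  ultimately have "(t+1)^(Suc l) \<le> n" by (simp only: power_Suc)
  then show False using big assms(3) by simp
qed

lemma ub_inj: "a1 < n \<Longrightarrow> b1 < n \<Longrightarrow> ubg l a1 = Some c \<Longrightarrow> ubg l b1 = Some c \<Longrightarrow> a1 = b1"
  using ubg_cl by (metis option.inject)

lemma db_inj: "a1 < n \<Longrightarrow> b1 < n \<Longrightarrow> dbg l a1 = Some c \<Longrightarrow> dbg l b1 = Some c \<Longrightarrow> a1 = b1"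
  using dbg_cl by (metis option.inject)

lemma K5:
  assumes a: "a < n" "lk a = Some k" "\<not> gd l a" "Suc l = k"
  shows "Bo l a \<noteq> D"
proof
  assume BD: "Bo l a = D"
  define P where "P x = (x < n \<and> lk x = Some (Suc l) \<and> \<not> gd l x)" for x
  have Pa: "P a" using a unfolding P_def by simp
  have clu: "\<And>x c. P x \<Longrightarrow> ubg l x = Some c \<Longrightarrow> P c" unfolding P_def using ubg_cl by metis
  have cld: "\<And>x c. P x \<Longrightarrow> dbg l x = Some c \<Longrightarrow> P c" unfolding P_def using dbg_cl by metis
  have iju: "\<And>x y c. P x \<Longrightarrow> P y \<Longrightarrow> ubg l x = Some c \<Longrightarrow> ubg l y = Some c \<Longrightarrow> x = y" unfolding P_def using ub_inj by blast
  have ijd: "\<And>x y c. P x \<Longrightarrow> P y \<Longrightarrow> dbg l x = Some c \<Longrightarrow> dbg l y = Some c \<Longrightarrow> x = y" unfolding P_def using db_inj by blast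
  have nc: "\<not> cycp t QG (ubg l) a" using BD by (auto simp: Bo_def badout_def)
  show False
  proof (cases "topw (ubg l) t a")
    case None
    then obtain z0 where z0: "iter (ubg l) (Suc t) a = Some z0" using topw_None by blast
    have def: "\<exists>z. iter (ubg l) i a = Some z" if "i \<le> t" for i
    proof (rule ccontr)
      assume "\<not> (\<exists>z. iter (ubg l) i a = Some z)"
      then have "iter (ubg l) i a = None" by simp
      then show False using iter_None_mono[of "ubg l" i a "Suc t"] that z0 by simp
    qed
    define g where "g i = the (iter (ubg l) i a)" for i
    have gi: "iter (ubg l) i a = Some (g i)" if "i \<le> t" for i using def[OF that] g_def by auto
    have "inj_on g {0..t}"
    proof (rule inj_onI)
      have aux: "i = j" if ij: "i \<le> j" "j \<le> t" "g i = g j" for i j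
      proof (rule ccontr)
        assume "i \<noteq> j"
        have ci: "iter (ubg l) (j - i) a = Some a"
          by (rule iter_cancel[where P=P, OF iju clu Pa gi[of i]]) (use ij gi[of j] in auto)
        have "j - i \<in> {1..t}" using ij \<open>i \<noteq> j\<close> by auto
        then have "cycp t QG (ubg l) a" using cyc_glob[OF a(1)] ci by blast
        then show False using nc by simp
      qed
      fix i j assume "i \<in> {0..t}" "j \<in> {0..t}" "g i = g j"
      then show "i = j" using aux[of i j] aux[of j i] by fastforce
    qed
    moreover have "g ` {0..t} \<subseteq> {a. a < n \<and> lk a = Some (Suc l) \<and> \<not> gd l a}"
    proof
      fix z assume "z \<in> g ` {0..t}"
      then obtain i where it: "i \<le> t" "z = g i" by auto
      have "P z" using iter_closed[where P=P and s="ubg l", OF clu Pa gi[OF it(1)]] it(2) by simp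
      then show "z \<in> {a. a < n \<and> lk a = Some (Suc l) \<and> \<not> gd l a}" unfolding P_def by simp
    qed
    ultimately show False using no_big a(4) by blast
  next
    case (Some T)
    then obtain i where i: "iter (ubg l) i a = Some T" "ubg l T = None" using topw_Some by blast
    have PT: "P T" using iter_closed[where P=P and s="ubg l", OF clu Pa i(1)] .
    have "topw (dbg l) (t - 1) T = None"
    proof (rule ccontr)
      assume "topw (dbg l) (t - 1) T \<noteq> None"
      then obtain b where b: "topw (dbg l) (t - 1) T = Some b" by blast
      then obtain j where jb: "iter (dbg l) j T = Some b" using topw_Some by blast
      have "P b" using iter_closed[where P=P and s="dbg l", OF cld PT jb] .
      then have "cin (lab I b) \<noteq> D" using cin_RB unfolding P_def by fastforce
      then show False using BD nc b Some by (simp add: Bo_def badout_def)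
    qed
    then obtain z0 where z0: "iter (dbg l) (Suc (t - 1)) T = Some z0" using topw_None by blast
    have def: "\<exists>z. iter (dbg l) i T = Some z" if "i \<le> t" for i
    proof (rule ccontr)
      assume "\<not> (\<exists>z. iter (dbg l) i T = Some z)"
      then have "iter (dbg l) i T = None" by simp
      then show False using iter_None_mono[of "dbg l" i T "Suc (t - 1)"] that z0 t1 by simp
    qed
    define g where "g i = the (iter (dbg l) i T)" for i
    have gi: "iter (dbg l) i T = Some (g i)" if "i \<le> t" for i using def[OF that] g_def by auto
    have "inj_on g {0..t}"
    proof (rule inj_onI)
      have aux: "i = j" if ij: "i \<le> j" "j \<le> t" "g i = g j" for i j
      proof (rule ccontr)
        assume "i \<noteq> j"
        have e: "iter (dbg l) (j - i) T = Some T"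
          by (rule iter_cancel[where P=P, OF ijd cld PT gi[of i]]) (use ij gi[of j] in auto)
        obtain m where "j - i = Suc m" using \<open>i \<noteq> j\<close> ij by (cases "j - i") auto
        then obtain w where w: "iter (dbg l) m T = Some w" "dbg l w = Some T" using iter_db_pred e by metis
        have "P w" using iter_closed[where P=P and s="dbg l", OF cld PT w(1)] .
        then have "ubg l T = Some w" using dbg_cl w(2) unfolding P_def by blast
        then show False using i(2) by simp
      qed
      fix i j assume "i \<in> {0..t}" "j \<in> {0..t}" "g i = g j"
      then show "i = j" using aux[of i j] aux[of j i] by fastforce
    qed
    moreover have "g ` {0..t} \<subseteq> {a. a < n \<and> lk a = Some (Suc l) \<and> \<not> gd l a}"
    proof
      fix z assume "z \<in> g ` {0..t}"
      then obtain i where it: "i \<le> t" "z = g i" by auto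
      have "P z" using iter_closed[where P=P and s="dbg l", OF cld PT gi[OF it(1)]] it(2) by simp
      then show "z \<in> {a. a < n \<and> lk a = Some (Suc l) \<and> \<not> gd l a}" unfolding P_def by simp
    qed
    ultimately show False using no_big a(4) by blast
  qed
qed


abbreviation "outG \<equiv> outF NG QG k t"

lemma outG_None: "lk v = None \<Longrightarrow> outG v = X" by (simp add: outF_def)
lemma outG_Some: "lk v = Some (Suc l) \<Longrightarrow> outG v = (if gd l v then X else Bo l v)"
  by (simp add: outF_def oF_Suc del: oF.simps)

lemma vA:
  assumes v: "v < n" "lk v = Some (Suc l)" "gd l v"
  shows "outG v = X" "rc_out_in I k outG v {R, B, X}" "1 \<le> l"
proof -
  show "outG v = X" using outG_Some v by simp
  have g: "1 \<le> l \<and> (case RCk I k v of None \<Rightarrow> True | Some u \<Rightarrow> oF NG QG k t l u \<noteq> D)"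
    using v(3) rcF_glob[OF v(1)] by (simp add: gd_def goodp_def)
  then show "1 \<le> l" by simp
  show "rc_out_in I k outG v {R, B, X}" unfolding rc_out_in_def
  proof (intro allI impI)
    fix u assume u: "RCk I k v = Some u"
    obtain l' where "Suc l = Suc l'" "lk u = Some l'" using RCk_props(4)[OF v(1) u v(2)] by blast
    then have "outG u = oF NG QG k t l u" by (simp add: outF_def)
    moreover have "oF NG QG k t l u \<noteq> D" using g u by simp
    ultimately show "outG u \<in> {R, B, X}" by (cases "outG u") auto
  qed
qed

lemma vE:
  assumes v: "v < n" "lk v = Some (Suc l)" "LCk I k v = Some c" "gd l c"
  shows "outG c = X" "dbg l v = None"
proof -
  have "lk c = Some (Suc l)" using LCk_props(2)[OF v(1,3)] v(2) by simp
  then show "outG c = X" using outG_Some v(4) by simp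
  show "dbg l v = None" using dbg_iff[OF v(1)] v(3,4) by (cases "dbg l v") auto
qed

lemma valid: "hthc_valid k n I outG"
  unfolding hthc_valid_def Let_def
proof (intro allI impI)
  fix v assume vn: "v < n"
  have leaf: "is_leaf I k v \<longleftrightarrow> LCk I k v = None" by (simp add: is_leaf_def)
  show "((\<forall>l. level I v = Some l \<longrightarrow> l \<le> k) \<or> outG v = X) \<and>
         (is_leaf I k v \<longrightarrow> outG v \<in> {cin (lab I v), D, X}) \<and>
         (\<forall>l. level I v = Some l \<longrightarrow>
             (l = 1 \<longrightarrow> outG v \<in> {R, B, D} \<and> (\<not> is_leaf I k v \<longrightarrow> outG v = outG (the (LCk I k v)))) \<and>
             (1 < l \<and> l < k \<and> \<not> is_leaf I k v \<longrightarrow>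
              outG v = outG (the (LCk I k v)) \<and> outG (the (LCk I k v)) \<in> {R, B, D} \<or>
              outG v = X \<and> rc_out_in I k outG v {R, B, X} \<or>
              outG v \<in> {cin (lab I v), D} \<and> outG (the (LCk I k v)) = X) \<and>
             (l = k \<longrightarrow>
              outG v \<in> {R, B, X} \<and>
              (outG v = X \<longrightarrow> rc_out_in I k outG v {R, B, X}) \<and>
              (\<not> is_leaf I k v \<and> outG v \<noteq> X \<longrightarrow>
               outG (the (LCk I k v)) \<noteq> X \<and> outG v = outG (the (LCk I k v)) \<or>
               outG (the (LCk I k v)) = X \<and> outG v = cin (lab I v))))"
  proof (cases "lk v")
    case None
    then have o: "outG v = X" using outG_None by simp
    have "level I v = Some L \<Longrightarrow> k < L" for L using None lk_iff by (metis not_le_imp_less option.distinct(1) option.exhaust)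
    then show ?thesis using o k1 by auto
  next
    case (Some L)
    then obtain l where L: "L = Suc l" using lk_pos by (cases L) auto
    have lv: "lk v = Some (Suc l)" using Some L by simp
    have lev: "level I v = Some (Suc l)" "Suc l \<le> k" using lk_iff lv by auto
    show ?thesis
    proof (cases "gd l v")
      case True
      note A = vA[OF vn lv True]
      show ?thesis using A lev by auto
    next
      case False
      have ov: "outG v = Bo l v" using outG_Some lv False by simp
      have RBD: "outG v \<in> {R, B, D}" using ov K3 vn by simp
      have C: "dbg l v = None \<Longrightarrow> outG v \<in> {cin (lab I v), D}" using ov K1 vn by simp
      have F: "Suc l = k \<Longrightarrow> outG v \<noteq> D" using ov K5[OF vn _ False] lv by simp
      have lf: "LCk I k v = None \<Longrightarrow> outG v \<in> {cin (lab I v), D}"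
        using C dbg_iff[OF vn] by (cases "dbg l v") auto
      have nl: "outG v = outG c \<and> outG c \<in> {R,B,D} \<or> outG v \<in> {cin (lab I v), D} \<and> outG c = X"
        if c: "LCk I k v = Some c" for c
      proof (cases "gd l c")
        case True
        then show ?thesis using vE[OF vn lv c True] C by simp
      next
        case False
        have cn: "c < n" "lk c = Some (Suc l)" using LCk_props[OF vn c] lv by auto
        have "dbg l v = Some c" using dbg_iff[OF vn] c False \<open>\<not> gd l v\<close> by simp
        then have "outG v = outG c" using K2[OF vn cn(1)] ov outG_Some[OF cn(2)] False by simp
        then show ?thesis using RBD by simp
      qed
      have nl1: "outG v = outG c" if c: "LCk I k v = Some c" "l = 0" for c
      proof -
        have "\<not> gd l c" using c(2) by (simp add: gd_def goodp_def)
        have cn: "c < n" "lk c = Some (Suc l)" using LCk_props[OF vn c(1)] lv by auto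
        have "dbg l v = Some c" using dbg_iff[OF vn] c \<open>\<not> gd l c\<close> \<open>\<not> gd l v\<close> by simp
        then show "outG v = outG c" using K2[OF vn cn(1)] ov outG_Some[OF cn(2)] \<open>\<not> gd l c\<close> by simp
      qed
      show ?thesis
      proof (intro conjI allI impI)
        show "(\<forall>l. level I v = Some l \<longrightarrow> l \<le> k) \<or> outG v = X" using lev by simp
        show "is_leaf I k v \<Longrightarrow> outG v \<in> {cin (lab I v), D, X}" using lf leaf by auto
        fix l' assume l': "level I v = Some l'"
        then have l'e: "l' = Suc l" using lev by simp
        show "l' = 1 \<Longrightarrow> outG v \<in> {R, B, D}" using RBD by simp
        show "l' = 1 \<Longrightarrow> \<not> is_leaf I k v \<Longrightarrow> outG v = outG (the (LCk I k v))"
          using nl1 leaf l'e by auto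
        show "1 < l' \<and> l' < k \<and> \<not> is_leaf I k v \<Longrightarrow>
              outG v = outG (the (LCk I k v)) \<and> outG (the (LCk I k v)) \<in> {R, B, D} \<or>
              outG v = X \<and> rc_out_in I k outG v {R, B, X} \<or>
              outG v \<in> {cin (lab I v), D} \<and> outG (the (LCk I k v)) = X"
          using nl leaf by auto
        show "l' = k \<Longrightarrow> outG v \<in> {R, B, X}" using RBD F l'e by auto
        show "l' = k \<Longrightarrow> outG v = X \<Longrightarrow> rc_out_in I k outG v {R, B, X}" using RBD by simp
        show "l' = k \<Longrightarrow> \<not> is_leaf I k v \<and> outG v \<noteq> X \<Longrightarrow>
               outG (the (LCk I k v)) \<noteq> X \<and> outG v = outG (the (LCk I k v)) \<or>
               outG (the (LCk I k v)) = X \<and> outG v = cin (lab I v)"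
        proof -
          assume lk': "l' = k" and h: "\<not> is_leaf I k v \<and> outG v \<noteq> X"
          then obtain c where c: "LCk I k v = Some c" using leaf by auto
          have nD: "outG v \<noteq> D" using F lk' l'e by simp
          show ?thesis using nl[OF c] nD RBD c by auto
        qed
      qed
    qed
  qed
qed

end

function wn :: "nat \<Rightarrow> inst \<Rightarrow> nat \<Rightarrow> nat \<Rightarrow> bool \<times> nat" where
  "wn b I v m = (if m = 0 \<or> b < 2 then (m = 0, if m = 0 then v else port I v 1) else
     (if 1 \<le> m mod b \<and> fst (wn b I v (m div b)) \<and> m mod b \<le> deg I (snd (wn b I v (m div b)))
      then (True, port I (snd (wn b I v (m div b))) (m mod b)) else (False, port I v 1)))"
  by pat_completeness auto
termination by (relation "measure (\<lambda>(b, I, v, m). m)") auto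

function vl :: "nat \<Rightarrow> ob list \<Rightarrow> nat \<Rightarrow> bool" where
  "vl b L m = (if m = 0 \<or> b < 2 then m = 0 else
     1 \<le> m mod b \<and> vl b L (m div b) \<and> m mod b \<le> fst (snd (L ! (m div b))))"
  by pat_completeness auto
termination by (relation "measure (\<lambda>(b, L, m). m)") auto

declare wn.simps[simp del] vl.simps[simp del]

definition tt :: "nat \<Rightarrow> nat \<Rightarrow> nat" where "tt k n = nat \<lfloor>real n powr (1 / real k)\<rfloor>"

definition OL :: "ob list \<Rightarrow> nat \<Rightarrow> ob" where
  "OL L a = (if a < length L then L ! a else (0, 0, undefined))"

definition ALG :: "nat \<Rightarrow> algorithm" where
  "ALG \<Delta> k n L = (let b = \<Delta> + 1; m = length L in
     if m < b ^ costf k (tt k n) k \<and> 1 \<le> fst (snd (L ! 0)) then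
       (if vl b L m then Query (m div b) (m mod b) else Query 0 1)
     else Output (outF (\<lambda>x j. x * b + j) (OL L) k (tt k n) 0))"

locale conc =
  fixes \<Delta> :: nat and I :: inst and v :: nat and n :: nat and k :: nat
  assumes D3: "1 \<le> \<Delta>" and vn: "v < n"
    and degs: "\<forall>x<n. deg I x \<le> \<Delta>" and ports: "\<forall>x<n. \<forall>j. 1 \<le> j \<and> j \<le> deg I x \<longrightarrow> port I x j < n"
    and labp: "\<forall>x<n. \<forall>j. (par (lab I x) = Some j \<or> lc (lab I x) = Some j \<or> rc (lab I x) = Some j) \<longrightarrow> 1 \<le> j \<and> j \<le> deg I x"
begin

abbreviation "b \<equiv> \<Delta> + 1"
abbreviation "V m \<equiv> fst (wn b I v m)"
abbreviation "Wn m \<equiv> snd (wn b I v m)"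
abbreviation "RR \<equiv> costf k (tt k n) k"
abbreviation "LL m \<equiv> map (obs I) (map Wn [0..<m])"

lemma obs_deg: "fst (snd (obs I w)) = deg I w" by (simp add: obs_def)

lemma b2: "2 \<le> b" using D3 by simp

lemma wn0: "wn b I v 0 = (True, v)" by (simp add: wn.simps)

lemma wnS: "0 < m \<Longrightarrow> wn b I v m = (if 1 \<le> m mod b \<and> V (m div b) \<and> m mod b \<le> deg I (Wn (m div b))
      then (True, port I (Wn (m div b)) (m mod b)) else (False, port I v 1))"
  using b2 by (subst wn.simps) simp

lemma W_lt: "V a \<Longrightarrow> Wn a < n"
proof (induction a rule: less_induct)
  case (less a)
  show ?case
  proof (cases "a = 0")
    case True then show ?thesis using wn0 vn by simp
  next
    case False
    then have a: "0 < a" by simp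
    have d: "a div b < a" using a b2 by simp
    have c: "1 \<le> a mod b \<and> V (a div b) \<and> a mod b \<le> deg I (Wn (a div b))" using less.prems wnS[OF a] by (auto split: if_splits)
    then have "Wn (a div b) < n" using less.IH d by blast
    then show ?thesis using wnS[OF a] c ports by simp
  qed
qed

lemma V_deg: "V a \<Longrightarrow> 0 < a \<Longrightarrow> 1 \<le> deg I v"
proof (induction a rule: less_induct)
  case (less a)
  have d: "a div b < a" using less.prems b2 by simp
  have c: "1 \<le> a mod b \<and> V (a div b) \<and> a mod b \<le> deg I (Wn (a div b))" using less.prems wnS[of a] by (auto split: if_splits)
  show ?case
  proof (cases "a div b = 0")
    case True then show ?thesis using c wn0 by simp
  next
    case False then show ?thesis using less.IH d c by blast
  qed
qed

lemma vl_eq: "0 < M \<Longrightarrow> m \<le> M \<Longrightarrow> vl b (LL M) m = V m"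
proof (induction m rule: less_induct)
  case (less m)
  show ?case
  proof (cases "m = 0")
    case True then show ?thesis using wn0 by (simp add: vl.simps)
  next
    case False
    then have m: "0 < m" by simp
    have d: "m div b < m" using m b2 by simp
    have e: "(LL M) ! (m div b) = obs I (Wn (m div b))" using d less.prems by simp
    have "vl b (LL M) m = (1 \<le> m mod b \<and> vl b (LL M) (m div b) \<and> m mod b \<le> fst (snd ((LL M) ! (m div b))))"
      using m b2 by (subst vl.simps) simp
    also have "\<dots> = (1 \<le> m mod b \<and> V (m div b) \<and> m mod b \<le> deg I (Wn (m div b)))"
      using less.IH[OF d] less.prems d e by (simp add: obs_deg)
    also have "\<dots> = V m" using wnS[OF m] by simp
    finally show ?thesis .
  qed
qed

definition "cstar = outF (\<lambda>x j. x * b + j) (OL (LL (b ^ RR))) k (tt k n) 0"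

lemma exec_run:
  assumes dg: "1 \<le> deg I v"
  shows "b ^ RR - m = d \<Longrightarrow> 1 \<le> m \<Longrightarrow> m \<le> b ^ RR \<Longrightarrow>
    exec (ALG \<Delta> k n) I (map Wn [0..<m]) (Suc d) = Some (cstar, map Wn [0..<b ^ RR])"
proof (induction d arbitrary: m)
  case 0
  then have m: "m = b ^ RR" by simp
  show ?case using m by (simp add: ALG_def cstar_def Let_def)
next
  case (Suc d)
  have mlt: "m < b ^ RR" using Suc.prems by simp
  have L0: "LL m ! 0 = obs I v" using Suc.prems wn0 by (simp add: nth_map)
  have dv: "1 \<le> fst (snd (LL m ! 0))" using L0 dg by (simp add: obs_def)
  have vle: "vl b (LL m) m = V m" using vl_eq Suc.prems by simp
  have m0: "0 < m" using Suc.prems by simp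
  have IH: "exec (ALG \<Delta> k n) I (map Wn [0..<Suc m]) (Suc d) = Some (cstar, map Wn [0..<b ^ RR])"
    using Suc.IH[of "Suc m"] Suc.prems by simp
  have ms: "map Wn [0..<Suc m] = map Wn [0..<m] @ [Wn m]" by simp
  show ?case
  proof (cases "V m")
    case True
    have A: "ALG \<Delta> k n (map (obs I) (map Wn [0..<m])) = Query (m div b) (m mod b)"
      using mlt dv vle True by (simp add: ALG_def Let_def)
    have c: "1 \<le> m mod b \<and> V (m div b) \<and> m mod b \<le> deg I (Wn (m div b))" using True wnS[OF m0] by (auto split: if_splits)
    have w: "Wn m = port I (Wn (m div b)) (m mod b)" using c wnS[OF m0] by simp
    have d: "m div b < m" using m0 b2 by simp
    have "exec (ALG \<Delta> k n) I (map Wn [0..<m]) (Suc (Suc d)) = exec (ALG \<Delta> k n) I (map Wn [0..<m] @ [Wn m]) (Suc d)"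
      using A c w d by simp
    then show ?thesis using IH ms by simp
  next
    case False
    have A: "ALG \<Delta> k n (map (obs I) (map Wn [0..<m])) = Query 0 1"
      using mlt dv vle False by (simp add: ALG_def Let_def)
    have w: "Wn m = port I v 1" using False wnS[OF m0] by (auto split: if_splits)
    have "exec (ALG \<Delta> k n) I (map Wn [0..<m]) (Suc (Suc d)) = exec (ALG \<Delta> k n) I (map Wn [0..<m] @ [Wn m]) (Suc d)"
      using A w dg m0 wn0 by simp
    then show ?thesis using IH ms by simp
  qed
qed


lemma sim_out:
  assumes LQ: "\<And>a. V a \<Longrightarrow> a < b ^ RR \<Longrightarrow> OL L a = obs I (Wn a)" and k1: "1 \<le> k"
  shows "outF (\<lambda>x j. x * b + j) (OL L) k (tt k n) 0 = outF (port I) (obs I) k (tt k n) v"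
proof -
  define ok where "ok r a = (V a \<and> a < b ^ (RR - r) \<and> r \<le> RR)" for r a
  have bp: "\<And>x y. x \<le> y \<Longrightarrow> b ^ x \<le> b ^ y" by (rule power_increasing) simp_all
  interpret S: simu "\<lambda>x j. x * b + j" "OL L" "port I" "obs I" Wn ok
  proof
    fix r a assume oa: "ok r a"
    have "b ^ (RR - r) \<le> b ^ RR" using bp by simp
    then show "OL L a = obs I (Wn a)" using LQ oa unfolding ok_def by simp
  next
    fix r a r' assume oa: "ok r a" "r' \<le> r"
    have "b ^ (RR - r) \<le> b ^ (RR - r')" using bp oa(2) by simp
    then show "ok r' a" using oa unfolding ok_def by simp
  next
    fix r a j assume oka: "ok (Suc r) a" and j: "par (lb (OL L) a) = Some j \<or> lc (lb (OL L) a) = Some j \<or> rc (lb (OL L) a) = Some j"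
    have Va: "V a" "a < b ^ (RR - Suc r)" "Suc r \<le> RR" using oka unfolding ok_def by auto
    have "b ^ (RR - Suc r) \<le> b ^ RR" using bp by simp
    then have "a < b ^ RR" using Va(2) by simp
    then have "OL L a = obs I (Wn a)" using LQ Va by blast
    then have lb: "lb (OL L) a = lab I (Wn a)" by (simp add: lb_def obs_def)
    have wn: "Wn a < n" using W_lt Va by blast
    have jj: "1 \<le> j" "j \<le> deg I (Wn a)" using labp wn j lb by auto
    have jb: "j < b" using jj degs wn by fastforce
    have e: "a * b + j = j + a * b" by simp
    have bz: "b \<noteq> 0" by simp
    have m: "(a * b + j) mod b = j" "(a * b + j) div b = a"
      unfolding e using jb mod_mult_self1[of j a b] div_mult_self1[OF bz, of j a] by simp_all
    have pos: "0 < a * b + j" using jj by simp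
    have wn2: "wn b I v (a * b + j) = (True, port I (Wn a) j)" using wnS[OF pos] m jj Va by simp
    have "a * b + j < b ^ (RR - r)"
    proof -
      have "a + 1 \<le> b ^ (RR - Suc r)" using Va(2) by simp
      then have "(a + 1) * b \<le> b ^ (RR - Suc r) * b" by (rule mult_le_mono1)
      moreover have "b ^ (RR - Suc r) * b = b ^ (RR - r)" using Va(3)
        by (metis Suc_diff_Suc Suc_le_lessD mult.commute power_Suc)
      ultimately show ?thesis using jb by (simp add: algebra_simps)
    qed
    then show "ok r (a * b + j) \<and> Wn (a * b + j) = port I (Wn a) j" using wn2 Va unfolding ok_def by simp
  qed
  have ok0: "ok RR 0" unfolding ok_def using wn0 by simp
  have "k \<le> RR" using costf_ge[OF k1, of k "tt k n"] by simp
  then show ?thesis using S.outF_sim[OF ok0] wn0 by simp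
qed

lemma reach: "V a \<Longrightarrow> a < b ^ d \<Longrightarrow> \<exists>d'\<le>d. (adj I ^^ d') v (Wn a)"
proof (induction a arbitrary: d rule: less_induct)
  case (less a)
  show ?case
  proof (cases "a = 0")
    case True then show ?thesis using wn0 by (intro exI[of _ 0]) auto
  next
    case False
    then have a: "0 < a" by simp
    have dd: "a div b < a" using a b2 by simp
    have c: "1 \<le> a mod b \<and> V (a div b) \<and> a mod b \<le> deg I (Wn (a div b))" using less.prems wnS[OF a] by (auto split: if_splits)
    have w: "Wn a = port I (Wn (a div b)) (a mod b)" using c wnS[OF a] by simp
    obtain d1 where d1: "d = Suc d1" using less.prems a by (cases d) auto
    have "a div b < b ^ d1" using less.prems(2) d1 b2 by (simp add: div_less_iff_less_mult mult.commute)
    then obtain d' where d': "d' \<le> d1" "(adj I ^^ d') v (Wn (a div b))" using less.IH[OF dd] c by blast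
    have "adj I (Wn (a div b)) (Wn a)" unfolding adj_def using c w by (intro exI[of _ "a mod b"]) simp
    then have "(adj I ^^ Suc d') v (Wn a)" by (rule relpowp_Suc_I[OF d'(2)])
    then show ?thesis using d' d1 by (intro exI[of _ "Suc d'"]) auto
  qed
qed

lemma dist_bound:
  assumes "a < b ^ RR" "1 \<le> deg I v" "1 \<le> RR"
  shows "dist I v (Wn a) \<le> RR"
proof (cases "V a")
  case True
  then obtain d' where "d' \<le> RR" "(adj I ^^ d') v (Wn a)" using reach assms by blast
  then show ?thesis unfolding dist_def by (meson Least_le le_trans)
next
  case False
  have "a \<noteq> 0" using wn0 False by (cases "a = 0") auto
  then have "0 < a" by simp
  then have w: "Wn a = port I v 1" using False wnS[of a] by (auto split: if_splits)
  have "adj I v (Wn a)" unfolding adj_def using w assms by (intro exI[of _ 1]) simp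
  then have "(adj I ^^ 1) v (Wn a)" by (simp only: relpowp_1)
  then show ?thesis unfolding dist_def using assms(3) by (meson Least_le le_trans)
qed

end

lemma param_facts:
  assumes k1: "1 \<le> k" and n1: "1 \<le> n"
  shows "1 \<le> tt k n" "n < (tt k n + 1) ^ k" "real (tt k n) \<le> real n powr (1 / real k)" "1 \<le> real n powr (1 / real k)"
proof -
  define s where "s = real n powr (1 / real k)"
  have s1: "1 \<le> s" unfolding s_def using n1 by (intro ge_one_powr_ge_zero) auto
  have ts: "real (tt k n) = of_int \<lfloor>s\<rfloor>" unfolding tt_def s_def[symmetric] using s1 by simp
  show "1 \<le> tt k n" using s1 ts by linarith
  show "real (tt k n) \<le> real n powr (1 / real k)" using ts s_def by linarith
  show "1 \<le> real n powr (1 / real k)" using s1 s_def by simp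
  have lt: "s < real (tt k n + 1)" using ts by linarith
  have "s ^ k = s powr (real k)" using s1 by (simp add: powr_realpow)
  also have "\<dots> = real n powr (1 / real k * real k)" unfolding s_def by (simp add: powr_powr)
  also have "\<dots> = real n" using k1 n1 by simp
  finally have sk: "s ^ k = real n" .
  have "s ^ k < real (tt k n + 1) ^ k" using power_strict_mono[OF lt] s1 k1 by simp
  then have "real n < real ((tt k n + 1) ^ k)" using sk by simp
  then show "n < (tt k n + 1) ^ k" by linarith
qed

theorem mainTheorem6:
  fixes \<Delta> :: nat and \<alpha> :: real
  assumes "\<Delta> \<ge> 3" and "\<alpha> \<ge> 1"
  shows "\<exists>(A :: algorithm) (C :: real).
           \<forall>k n I. k \<ge> 1 \<longrightarrow> valid_graph \<Delta> \<alpha> n I \<longrightarrow> colored_tree_labeling \<Delta> n I \<longrightarrow>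
             (\<exists>out. hthc_valid k n I out \<and>
                (\<forall>v<n. \<exists>f vs. exec (A k n) I [v] f = Some (out v, vs) \<and>
                   (\<forall>w\<in>set vs. real (dist I v w) \<le> C * real k * real n powr (1 / real k))))"
proof (intro exI[of _ "ALG \<Delta>"] exI[of _ 7] allI impI)
  fix k n :: nat and I :: inst assume k1: "1 \<le> k" and vg: "valid_graph \<Delta> \<alpha> n I" and ct: "colored_tree_labeling \<Delta> n I"
  show "\<exists>out. hthc_valid k n I out \<and>
                (\<forall>v<n. \<exists>f vs. exec (ALG \<Delta> k n) I [v] f = Some (out v, vs) \<and>
                   (\<forall>w\<in>set vs. real (dist I v w) \<le> 7 * real k * real n powr (1 / real k)))"
  proof (cases "n = 0")
    case True
    then show ?thesis by (intro exI[of _ "\<lambda>_. X"]) (simp add: hthc_valid_def)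
  next
    case False
    then have n1: "1 \<le> n" by simp
    note pf = param_facts[OF k1 n1]
    define t where "t = tt k n"
    interpret G: glob \<Delta> \<alpha> n I k t
      using vg ct k1 pf unfolding t_def by unfold_locales auto
    define out where "out = outF (port I) (obs I) k t"
    have RRb: "real (costf k t k) \<le> 7 * real k * real n powr (1 / real k)"
    proof -
      have c: "costf k t k \<le> k * (2 * t + 3) + k + 1" by (rule costf_bound)
      then have c': "real (costf k t k) \<le> real (k * (2 * t + 3) + k + 1)" by (simp only: of_nat_le_iff)
      have "real (k * (2 * t + 3) + k + 1) = real k * (2 * real t + 3) + real k + 1" by simp
      then have "real (costf k t k) \<le> real k * (2 * real t + 3) + real k + 1" using c' by linarith
      also have "\<dots> \<le> 7 * real k * real n powr (1 / real k)"
      proof -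
        have tr: "real t \<le> real n powr (1 / real k)" using pf t_def by simp
        have s1: "1 \<le> real n powr (1 / real k)" using pf by simp
        have kk: "1 \<le> real k" using k1 by simp
        have "real k * (2 * real t + 3) \<le> real k * (2 * real n powr (1 / real k) + 3)" using tr kk by simp
        moreover have "real k + 1 \<le> 2 * real k * real n powr (1 / real k)"
        proof -
          have "2 * real k * 1 \<le> 2 * real k * real n powr (1 / real k)" using s1 kk by (intro mult_left_mono) auto
          then show ?thesis using kk by linarith
        qed
        moreover have "3 * real k \<le> 3 * real k * real n powr (1 / real k)" using s1 kk by simp
        ultimately show ?thesis by (simp add: algebra_simps)
      qed
      finally show ?thesis .
    qed
    have "\<forall>v<n. \<exists>f vs. exec (ALG \<Delta> k n) I [v] f = Some (out v, vs) \<and>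
                   (\<forall>w\<in>set vs. real (dist I v w) \<le> 7 * real k * real n powr (1 / real k))"
    proof (intro allI impI)
      fix v assume vn: "v < n"
      interpret C: conc \<Delta> I v n k
      proof
        show "1 \<le> \<Delta>" using assms by simp
        show "v < n" by fact
        show "\<forall>x<n. deg I x \<le> \<Delta>" using G.deg_le by blast
        show "\<forall>x<n. \<forall>j. 1 \<le> j \<and> j \<le> deg I x \<longrightarrow> port I x j < n" using G.port_lt by blast
        show "\<forall>x<n. \<forall>j. (par (lab I x) = Some j \<or> lc (lab I x) = Some j \<or> rc (lab I x) = Some j) \<longrightarrow> 1 \<le> j \<and> j \<le> deg I x"
          using G.lab_port by blast
      qed
      have R1: "1 \<le> costf k t k" using costf_ge[OF k1] by (metis le_add2 le_trans one_le_numeral add_leE)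
      show "\<exists>f vs. exec (ALG \<Delta> k n) I [v] f = Some (out v, vs) \<and>
                   (\<forall>w\<in>set vs. real (dist I v w) \<le> 7 * real k * real n powr (1 / real k))"
      proof (cases "1 \<le> deg I v")
        case True
        let ?N = "(\<Delta> + 1) ^ costf k t k"
        have N1: "1 \<le> ?N" by simp
        have ex: "exec (ALG \<Delta> k n) I (map C.Wn [0..<1]) (Suc (?N - 1)) = Some (C.cstar, map C.Wn [0..<?N])"
          using C.exec_run[OF True, of 1 "?N - 1"] N1 t_def by simp
        have m1: "map C.Wn [0..<1] = [v]" using C.wn0 by simp
        have cs: "C.cstar = out v"
        proof -
          have "C.cstar = outF (\<lambda>x j. x * (\<Delta> + 1) + j) (OL (C.LL ?N)) k (tt k n) 0" unfolding C.cstar_def t_def by simp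
          also have "\<dots> = outF (port I) (obs I) k (tt k n) v"
          proof (rule C.sim_out[OF _ k1])
            fix a assume "C.V a" "a < (\<Delta> + 1) ^ C.RR"
            then show "OL (C.LL ?N) a = obs I (C.Wn a)" unfolding t_def by (simp add: OL_def)
          qed
          finally show ?thesis unfolding out_def t_def .
        qed
        have db: "\<forall>w\<in>set (map C.Wn [0..<?N]). real (dist I v w) \<le> 7 * real k * real n powr (1 / real k)"
        proof
          fix w assume "w \<in> set (map C.Wn [0..<?N])"
          then obtain a where a: "a < ?N" "w = C.Wn a" by auto
          have "dist I v w \<le> costf k t k" using C.dist_bound[of a] a True R1 t_def by simp
          then show "real (dist I v w) \<le> 7 * real k * real n powr (1 / real k)" using RRb by linarith
        qed
        have ex2: "exec (ALG \<Delta> k n) I [v] (Suc (?N - 1)) = Some (out v, map C.Wn [0..<?N])" using ex m1 cs by simp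
        show ?thesis by (rule exI[of _ "Suc (?N - 1)"], rule exI[of _ "map C.Wn [0..<?N]"]) (use ex2 db in blast)
      next
        case False
        then have d0: "deg I v = 0" by simp
        have A: "ALG \<Delta> k n [obs I v] = Output (outF (\<lambda>x j. x * (\<Delta> + 1) + j) (OL [obs I v]) k (tt k n) 0)"
          using d0 by (simp add: ALG_def Let_def obs_def)
        have "outF (\<lambda>x j. x * (\<Delta> + 1) + j) (OL [obs I v]) k (tt k n) 0 = outF (port I) (obs I) k (tt k n) v"
        proof (rule C.sim_out[OF _ k1])
          fix a assume Va: "C.V a" "a < (\<Delta> + 1) ^ C.RR"
          have "a = 0" using C.V_deg Va d0 by fastforce
          then show "OL [obs I v] a = obs I (C.Wn a)" using C.wn0 by (simp add: OL_def)
        qed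
        then have ex: "exec (ALG \<Delta> k n) I [v] (Suc 0) = Some (out v, [v])" using A by (simp add: out_def t_def)
        have "dist I v v = 0" unfolding dist_def by (rule Least_eq_0) simp
        then show ?thesis using ex by (intro exI[of _ "Suc 0"] exI[of _ "[v]"]) simp
      qed
    qed
    moreover have "hthc_valid k n I out" using G.valid unfolding out_def .
    ultimately show ?thesis by blast
  qed
qed

end
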